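(* Let $\mathbb{K}$ be a field of characteristic $2$, let $(A,\cdot,\{-,-\},(-)^{\{2\}})$ be a restricted Poisson algebra, and let $n\ge0$. For every $(\varphi,\omega)\in C^n_{\rm PA}(A)$ we have $\mathrm{d}^n_{\rm PA}(\varphi,\omega)\in C^{n+1}_{\rm PA}(A)$; consequently $\big(\bigoplus_{n\ge0}C^n_{\rm PA}(A),\mathrm{d}^n_{\rm PA}\big)$ is a cochain complex.
   Context: $\mathbb{K}$ has characteristic $2$. Restricted Poisson algebra: commutative associative (not necessarily unital) $(A,\cdot)$ with Lie bracket $\{-,-\}$ satisfying $\{ab,c\}=a\{b,c\}+b\{a,c\}$, and a map $(-)^{\{2\}}$ such that $(\lambda x)^{\{2\}}=\lambda^2x^{\{2\}}$, $\mathrm{ad}_{x^{\{2\}}}=\mathrm{ad}_x^2$, $(x+y)^{\{2\}}=x^{\{2\}}+y^{\{2\}}+\{x,y\}$, and $(xy)^{\{2\}}=x^2y^{\{2\}}+y^2x^{\{2\}}+xy\{x,y\}$. $\mathfrak{X}^k(A)$: alternating $k$-linear maps $A^k\to A$ that are derivations of $\cdot$ in each argument. $C^0_{\rm PA}(A)=A$, $C^1_{\rm PA}(A)=\mathfrak{X}^1(A)$; for $n\ge2$, $C^n_{\rm PA}(A)$ consists of pairs $(\varphi,\omega)$ with $\varphi\in\mathfrak{X}^n(A)$ and $\omega:A\times A^{n-2}\to A$ alternating and multilinear in its last $n-2$ arguments, such that (with $z=(z_2,\dots,z_{n-1})$): $\omega(\lambda x,z)=\lambda^2\omega(x,z)$;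 $\omega(x+y,z)=\omega(x,z)+\omega(y,z)+\varphi(x,y,z)$; $\omega(xy,z)=x^2\omega(y,z)+y^2\omega(x,z)+xy\varphi(x,y,z)$; $\omega(x,z_2,..,z_iz_i',..,z_{n-1})=z_i\omega(x,..,z_i',..)+z_i'\omega(x,..,z_i,..)$. Differentials (with $x\cdot m=\{x,m\}$): $\mathrm{d}^0(a)(x)=\{x,a\}$; $\mathrm{d}^1\psi=(\mathrm{d}_{\rm CE}\psi,\delta^1\psi)$, $\delta^1\psi(x)=\psi(x^{\{2\}})+\{x,\psi(x)\}$; $\mathrm{d}^n(\varphi,\omega)=(\mathrm{d}_{\rm CE}\varphi,\delta^n\omega)$ where $\mathrm{d}_{\rm CE}\varphi(x_1,..,x_{n+1})=\sum_{i<j}\varphi(\{x_i,x_j\},x_1,..,\hat x_i,..,\hat x_j,..,x_{n+1})+\sum_i\{x_i,\varphi(x_1,..,\hat x_i,..,x_{n+1})\}$ and $\delta^n\omega(x,z_2,..,z_n)=\{x,\varphi(x,z_2,..,z_n)\}+\sum_{i=2}^n\{z_i,\omega(x,z_2,..,\hat z_i,..,z_n)\}+\varphi(x^{\{2\}},z_2,..,z_n)+\sum_{i=2}^n\varphi(\{x,z_i\},x,z_2,..,\hat z_i,..,z_n)+\sum_{2\le i<j\le n}\omega(x,\{z_i,z_j\},z_2,..,\hat z_i,..,\hat z_j,..,z_n)$. *)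

theory Defs
  imports Main "HOL.Vector_Spaces"
begin

(* A is a type 'a of class comm_ring (commutative, associative, not necessarily unital),
   made into a K-algebra via a vector-space scaling over a field 'k. *)

locale restricted_poisson_algebra =
  vector_space scale
  for scale :: "'k::field \<Rightarrow> 'a::comm_ring \<Rightarrow> 'a" +
  fixes br :: "'a \<Rightarrow> 'a \<Rightarrow> 'a"
    and sq :: "'a \<Rightarrow> 'a"
  assumes char_two: "CHAR('k) = 2"
    and scale_mult: "\<And>c x y. scale c (x * y) = scale c x * y"
    and br_add_left: "\<And>x y z. br (x + y) z = br x z + br y z"
    and br_add_right: "\<And>x y z. br x (y + z) = br x y + br x z"
    and br_scale_left: "\<And>c x y. br (scale c x) y = scale c (br x y)"
    and br_scale_right: "\<And>c x y. br x (scale c y) = scale c (br x y)"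
    and br_alt: "\<And>x. br x x = 0"
    and br_jacobi: "\<And>x y z. br x (br y z) + br y (br z x) + br z (br x y) = 0"
    and br_leibniz: "\<And>a b c. br (a * b) c = a * br b c + b * br a c"
    and sq_scale: "\<And>c x. sq (scale c x) = scale (c ^ 2) (sq x)"
    and sq_ad: "\<And>x y. br (sq x) y = br x (br x y)"
    and sq_add: "\<And>x y. sq (x + y) = sq x + sq y + br x y"
    and sq_mult: "\<And>x y. sq (x * y) = (x * x) * sq y + (y * y) * sq x + x * y * br x y"

(* k-ary maps A^k \<rightarrow> A are represented as functions on lists, used on lists of length k *)

definition multilinear_on :: "('k::field \<Rightarrow> 'a::comm_ring \<Rightarrow> 'a) \<Rightarrow> nat \<Rightarrow> ('a list \<Rightarrow> 'a) \<Rightarrow> bool" where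
  "multilinear_on scale k f \<longleftrightarrow>
     (\<forall>xs i a b. length xs = k \<longrightarrow> i < k \<longrightarrow> f (xs[i := a + b]) = f (xs[i := a]) + f (xs[i := b])) \<and>
     (\<forall>xs i c a. length xs = k \<longrightarrow> i < k \<longrightarrow> f (xs[i := scale c a]) = scale c (f (xs[i := a])))"

definition alternating_on :: "nat \<Rightarrow> ('a::comm_ring list \<Rightarrow> 'a) \<Rightarrow> bool" where
  "alternating_on k f \<longleftrightarrow> (\<forall>xs i j. length xs = k \<longrightarrow> i < j \<longrightarrow> j < k \<longrightarrow> xs ! i = xs ! j \<longrightarrow> f xs = 0)"

definition derivation_slots :: "nat \<Rightarrow> ('a::comm_ring list \<Rightarrow> 'a) \<Rightarrow> bool" where
  "derivation_slots k f \<longleftrightarrow>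
     (\<forall>xs i a b. length xs = k \<longrightarrow> i < k \<longrightarrow> f (xs[i := a * b]) = a * f (xs[i := b]) + b * f (xs[i := a]))"

definition multiderivation :: "('k::field \<Rightarrow> 'a::comm_ring \<Rightarrow> 'a) \<Rightarrow> nat \<Rightarrow> ('a list \<Rightarrow> 'a) \<Rightarrow> bool" where
  "multiderivation scale k f \<longleftrightarrow> multilinear_on scale k f \<and> alternating_on k f \<and> derivation_slots k f"

text \<open>Membership in C^n_PA(A) for n \<ge> 2: pairs (phi, omega), omega x zs with length zs = n - 2.\<close>
definition PA_cochain :: "('k::field \<Rightarrow> 'a::comm_ring \<Rightarrow> 'a) \<Rightarrow> nat \<Rightarrow> ('a list \<Rightarrow> 'a) \<times> ('a \<Rightarrow> 'a list \<Rightarrow> 'a) \<Rightarrow> bool" where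
  "PA_cochain scale n c \<longleftrightarrow> (case c of (\<phi>, \<omega>) \<Rightarrow>
     multiderivation scale n \<phi> \<and>
     (\<forall>x. multilinear_on scale (n - 2) (\<omega> x) \<and> alternating_on (n - 2) (\<omega> x) \<and> derivation_slots (n - 2) (\<omega> x)) \<and>
     (\<forall>c x z. length z = n - 2 \<longrightarrow> \<omega> (scale c x) z = scale (c ^ 2) (\<omega> x z)) \<and>
     (\<forall>x y z. length z = n - 2 \<longrightarrow> \<omega> (x + y) z = \<omega> x z + \<omega> y z + \<phi> (x # y # z)) \<and>
     (\<forall>x y z. length z = n - 2 \<longrightarrow> \<omega> (x * y) z = (x * x) * \<omega> y z + (y * y) * \<omega> x z + x * y * \<phi> (x # y # z)))"

definition del_at :: "nat \<Rightarrow> 'b list \<Rightarrow> 'b list" where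
  "del_at i xs = take i xs @ drop (Suc i) xs"

text \<open>Chevalley--Eilenberg differential (no signs since char K = 2); arity = length of input list.\<close>
definition dCE :: "('a::comm_ring \<Rightarrow> 'a \<Rightarrow> 'a) \<Rightarrow> ('a list \<Rightarrow> 'a) \<Rightarrow> 'a list \<Rightarrow> 'a" where
  "dCE br \<phi> xs =
     (\<Sum>j<length xs. \<Sum>i<j. \<phi> (br (xs ! i) (xs ! j) # del_at i (del_at j xs)))
     + (\<Sum>i<length xs. br (xs ! i) (\<phi> (del_at i xs)))"

definition d0 :: "('a::comm_ring \<Rightarrow> 'a \<Rightarrow> 'a) \<Rightarrow> 'a \<Rightarrow> 'a list \<Rightarrow> 'a" where
  "d0 br a = (\<lambda>xs. br (hd xs) a)"

definition delta1 :: "('a::comm_ring \<Rightarrow> 'a \<Rightarrow> 'a) \<Rightarrow> ('a \<Rightarrow> 'a) \<Rightarrow> ('a list \<Rightarrow> 'a) \<Rightarrow> 'a \<Rightarrow> 'a list \<Rightarrow> 'a" where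
  "delta1 br sq \<psi> = (\<lambda>x zs. \<psi> [sq x] + br x (\<psi> [x]))"

definition d1 :: "('a::comm_ring \<Rightarrow> 'a \<Rightarrow> 'a) \<Rightarrow> ('a \<Rightarrow> 'a) \<Rightarrow> ('a list \<Rightarrow> 'a) \<Rightarrow> ('a list \<Rightarrow> 'a) \<times> ('a \<Rightarrow> 'a list \<Rightarrow> 'a)" where
  "d1 br sq \<psi> = (dCE br \<psi>, delta1 br sq \<psi>)"

text \<open>delta^n omega (x, z_2, ..., z_n), with zs = [z_2, ..., z_n].\<close>
definition deltaN :: "('a::comm_ring \<Rightarrow> 'a \<Rightarrow> 'a) \<Rightarrow> ('a \<Rightarrow> 'a) \<Rightarrow> ('a list \<Rightarrow> 'a) \<Rightarrow> ('a \<Rightarrow> 'a list \<Rightarrow> 'a) \<Rightarrow> 'a \<Rightarrow> 'a list \<Rightarrow> 'a" where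
  "deltaN br sq \<phi> \<omega> x zs =
     br x (\<phi> (x # zs))
     + (\<Sum>i<length zs. br (zs ! i) (\<omega> x (del_at i zs)))
     + \<phi> (sq x # zs)
     + (\<Sum>i<length zs. \<phi> (br x (zs ! i) # x # del_at i zs))
     + (\<Sum>j<length zs. \<Sum>i<j. \<omega> x (br (zs ! i) (zs ! j) # del_at i (del_at j zs)))"

definition dPA :: "('a::comm_ring \<Rightarrow> 'a \<Rightarrow> 'a) \<Rightarrow> ('a \<Rightarrow> 'a) \<Rightarrow> ('a list \<Rightarrow> 'a) \<times> ('a \<Rightarrow> 'a list \<Rightarrow> 'a) \<Rightarrow> ('a list \<Rightarrow> 'a) \<times> ('a \<Rightarrow> 'a list \<Rightarrow> 'a)" where
  "dPA br sq c = (case c of (\<phi>, \<omega>) \<Rightarrow> (dCE br \<phi>, deltaN br sq \<phi> \<omega>))"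

definition PA_is_zero :: "nat \<Rightarrow> ('a::comm_ring list \<Rightarrow> 'a) \<times> ('a \<Rightarrow> 'a list \<Rightarrow> 'a) \<Rightarrow> bool" where
  "PA_is_zero n c \<longleftrightarrow> (case c of (\<phi>, \<omega>) \<Rightarrow>
     (\<forall>xs. length xs = n \<longrightarrow> \<phi> xs = 0) \<and> (\<forall>x zs. length zs = n - 2 \<longrightarrow> \<omega> x zs = 0))"

end

theory Submission
  imports Defs "HOL-Library.Multiset"
begin

lemma del_at_0[simp]: "del_at 0 (x # xs) = xs" by (simp add: del_at_def)
lemma del_at_Suc[simp]: "del_at (Suc i) (x # xs) = x # del_at i xs" by (simp add: del_at_def)
lemma length_del_at[simp]: "i < length xs \<Longrightarrow> length (del_at i xs) = length xs - 1"
  by (simp add: del_at_def)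
lemma nth_del_at_less: "i < j \<Longrightarrow> j < length xs \<Longrightarrow> del_at j xs ! i = xs ! i"
  by (simp add: del_at_def nth_append)

lemma mset_del_at: "i < length xs \<Longrightarrow> mset xs = add_mset (xs ! i) (mset (del_at i xs))"
proof -
  assume i: "i < length xs"
  have "xs = take i xs @ xs ! i # drop (Suc i) xs" using i by (rule id_take_nth_drop)
  then have "mset xs = mset (take i xs @ xs ! i # drop (Suc i) xs)" by simp
  then show ?thesis by (simp add: del_at_def)
qed

lemma mset_upd_del: "i < length xs \<Longrightarrow> mset (xs[i := c]) = mset (c # del_at i xs)"
proof -
  assume i: "i < length xs"
  have "mset xs - {#xs ! i#} = mset (del_at i xs)" using mset_del_at[OF i] by simp
  then show ?thesis using i by (simp add: mset_update)
qed

definition symm :: "nat \<Rightarrow> ('a list \<Rightarrow> 'b) \<Rightarrow> bool" where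
  "symm k f \<longleftrightarrow> (\<forall>xs ys. length xs = k \<longrightarrow> mset ys = mset xs \<longrightarrow> f ys = f xs)"

lemma symmD: "symm k f \<Longrightarrow> length xs = k \<Longrightarrow> mset ys = mset xs \<Longrightarrow> f ys = f xs"
  unfolding symm_def by blast

lemma symm_le1: "k \<le> 1 \<Longrightarrow> symm k f"
  unfolding symm_def
proof (intro allI impI)
  fix xs ys :: "'a list" assume "k \<le> 1" "length xs = k" "mset ys = mset xs"
  then show "f ys = f xs"
  proof (cases xs)
    case Nil then show ?thesis using \<open>mset ys = mset xs\<close> by simp
  next
    case (Cons a t)
    then have "t = []" using \<open>k \<le> 1\<close> \<open>length xs = k\<close> by auto
    then show ?thesis using Cons \<open>mset ys = mset xs\<close> by simp
  qed
qed

lemma symm_cons_intro: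
  assumes h1: "\<And>x. symm k (\<lambda>zs. F (x # zs))"
    and h2: "\<And>x y zs. Suc (Suc (length zs)) = Suc k \<Longrightarrow> F (x # y # zs) = F (y # x # zs)"
  shows "symm (Suc k) F"
  unfolding symm_def
proof (intro allI impI)
  fix xs ys :: "'a list" assume l: "length xs = Suc k" and m: "mset ys = mset xs"
  obtain x xs' where xs: "xs = x # xs'" using l by (cases xs) auto
  have "length ys = length xs" using m by (rule mset_eq_length)
  then have "length ys = Suc k" using l by simp
  then obtain y ys' where ys: "ys = y # ys'" by (cases ys) auto
  show "F ys = F xs"
  proof (cases "x = y")
    case True
    then have "mset ys' = mset xs'" using m xs ys by simp
    then show ?thesis using symmD[OF h1[of x], of xs' ys'] l xs ys True by simp
  next
    case False
    have "y \<in># mset ys" using ys by simp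
    then have "y \<in># mset xs" using m by simp
    then have "y \<in> set xs'" using xs False by auto
    define rest where "rest = remove1 y xs'"
    have mr: "mset xs' = mset (y # rest)" using \<open>y \<in> set xs'\<close> by (simp add: rest_def)
    have "length xs' = length (y # rest)" using mr by (rule mset_eq_length)
    then have lr: "Suc (Suc (length rest)) = Suc k" using l xs by simp
    have e1: "F (x # xs') = F (x # y # rest)"
      using symmD[OF h1[of x], of "y # rest" xs'] mr lr by simp
    have e2: "F (x # y # rest) = F (y # x # rest)" using h2 lr by blast
    have "mset (x # y # rest) = mset (y # ys')" using m xs ys mr by simp
    then have "mset ys' = mset (x # rest)" by simp
    then have e3: "F (y # x # rest) = F (y # ys')"
      using symmD[OF h1[of y], of "x # rest" ys'] lr by simp
    show ?thesis using e1 e2 e3 xs ys by simp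
  qed
qed

lemma symm_upd: "symm k f \<Longrightarrow> length xs = k \<Longrightarrow> i < k \<Longrightarrow> f (xs[i := c]) = f (c # del_at i xs)"
  using symmD[of k f "c # del_at i xs" "xs[i := c]"] mset_upd_del[of i xs c] by simp


context restricted_poisson_algebra begin

lemma two_k: "(1::'k) + 1 = 0"
proof -
  have "(of_nat 2 :: 'k) = 0" using char_two by (simp only: of_nat_eq_0_iff_char_dvd) simp
  then show ?thesis by simp
qed

lemma add_self[simp]: "(x::'a) + x = 0"
proof -
  have "x + x = scale 1 x + scale 1 x" by simp
  also have "\<dots> = scale (1 + 1) x" by (simp only: scale_left_distrib)
  also have "\<dots> = 0" by (simp only: two_k scale_zero_left)
  finally show ?thesis .
qed

lemma add_self_left[simp]: "(x::'a) + (x + y) = y"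
  by (simp add: add.assoc[symmetric])

lemma neg_self[simp]: "- (x::'a) = x"
  by (rule minus_unique) simp

lemma diff_self_add[simp]: "(x::'a) - y = x + y"
  by (simp only: diff_conv_add_uminus neg_self)

lemma eq_iff_add0: "((a::'a) = b) \<longleftrightarrow> a + b = 0"
proof
  assume "a = b" then show "a + b = 0" by simp
next
  assume "a + b = 0" then have "a + (a + b) = a" by simp
  then show "a = b" by simp
qed

lemmas C2 = add.assoc add.commute add.left_commute add_self add_self_left

lemma mult_two_zero[simp]: "(x::'a) * y + x * y = 0" by simp

lemma br_0l[simp]: "br 0 y = 0" using br_add_left[of 0 0 y] by simp
lemma br_0r[simp]: "br y 0 = 0" using br_add_right[of y 0 0] by simp

lemma br_sym: "br x y = br y x"
proof -
  have "0 = br (x + y) (x + y)" by (rule br_alt[symmetric])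
  also have "\<dots> = br x x + br y x + (br x y + br y y)" by (simp only: br_add_left br_add_right)
  also have "\<dots> = br y x + br x y" by (simp only: br_alt add_0_left add_0_right)
  finally have "br x y + br y x = 0" by (simp only: add.commute)
  then show ?thesis by (subst eq_iff_add0)
qed

lemma br_leib_right: "br c (a * b) = a * br c b + b * br c a"
  using br_leibniz[of a b c] by (simp add: br_sym[of c])

lemma jac: "br x (br y m) + br y (br x m) = br (br x y) m"
proof -
  have "br x (br y m) + br y (br m x) + br m (br x y) = 0" by (rule br_jacobi)
  then have "br x (br y m) + br y (br x m) + br (br x y) m = 0" by (simp only: br_sym[of m] br_sym[of _ x])
  then show ?thesis by (subst eq_iff_add0) (simp only: add.assoc)
qed

lemma br_sum_right: "br a (sum f A) = sum (\<lambda>i. br a (f i)) A"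
  using sum_comp_morphism[of "br a" f A] by (simp add: br_add_right o_def)

lemma br_sum_left: "br (sum f A) a = sum (\<lambda>i. br (f i) a) A"
  using sum_comp_morphism[of "\<lambda>u. br u a" f A] by (simp add: br_add_left o_def)

lemma scale_mult_right: "scale c (x * y) = x * scale c y"
  using scale_mult[of c y x] by (simp add: mult.commute)

lemma sq_ad': "br x (br x y) = br (sq x) y" by (simp add: sq_ad)

lemma br_scale_sq: "br (scale c x) (scale d y) = scale (c * d) (br x y)"
  by (simp add: br_scale_left br_scale_right)

lemma sum_sym_diag:
  fixes m :: nat
  assumes "\<And>k l. h k l = h l k"
  shows "(\<Sum>k<m. \<Sum>l<m. h k l) = (\<Sum>k<m. (h k k :: 'a))"
proof (induction m)
  case 0 then show ?case by simp
next
  case (Suc m)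
  have "(\<Sum>k<Suc m. \<Sum>l<Suc m. h k l) = (\<Sum>k<m. \<Sum>l<m. h k l) + (\<Sum>k<m. h k m) + (\<Sum>l<m. h m l) + h m m"
    by (simp add: sum.distrib C2)
  also have "(\<Sum>l<m. h m l) = (\<Sum>k<m. h k m)" using assms by simp
  finally have "(\<Sum>k<Suc m. \<Sum>l<Suc m. h k l) = (\<Sum>k<m. \<Sum>l<m. h k l) + (\<Sum>k<m. h k m) + (\<Sum>k<m. h k m) + h m m" .
  also have "\<dots> = (\<Sum>k<m. \<Sum>l<m. h k l) + h m m" by (simp only: add.assoc add_self_left)
  also have "\<dots> = (\<Sum>k<m. h k k) + h m m" by (simp only: Suc.IH)
  also have "\<dots> = (\<Sum>k<Suc m. h k k)" by simp
  finally show ?case .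
qed

end

definition Eo :: "('a::comm_ring \<Rightarrow> 'a \<Rightarrow> 'a) \<Rightarrow> 'a \<Rightarrow> ('a list \<Rightarrow> 'a) \<Rightarrow> 'a list \<Rightarrow> 'a" where
  "Eo br a f zs = (\<Sum>k<length zs. f (zs[k := br a (zs ! k)]))"

definition Lo :: "('a::comm_ring \<Rightarrow> 'a \<Rightarrow> 'a) \<Rightarrow> 'a \<Rightarrow> ('a list \<Rightarrow> 'a) \<Rightarrow> 'a list \<Rightarrow> 'a" where
  "Lo br a f zs = br a (f zs) + Eo br a f zs"

definition ct :: "'b \<Rightarrow> ('b list \<Rightarrow> 'c) \<Rightarrow> 'b list \<Rightarrow> 'c" where
  "ct x f = (\<lambda>zs. f (x # zs))"

lemma ct_apply[simp]: "ct x f zs = f (x # zs)" by (simp add: ct_def)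

lemma E_Nil[simp]: "Eo br a f [] = 0" by (simp add: Eo_def)

lemma E_Cons: "Eo br a f (y # zs) = f (br a y # zs) + Eo br a (ct y f) zs"
  unfolding Eo_def by (simp only: length_Cons sum.lessThan_Suc_shift) simp

lemma L_Cons: "Lo br a f (y # zs) = br a (f (y # zs)) + f (br a y # zs) + Eo br a (ct y f) zs"
  unfolding Lo_def by (simp add: E_Cons add.assoc)

lemma E_cong: "(\<And>w. length w = length zs \<Longrightarrow> f w = g w) \<Longrightarrow> Eo br a f zs = Eo br a g zs"
  unfolding Eo_def by (intro sum.cong) auto

lemma L_cong: "(\<And>w. length w = length zs \<Longrightarrow> f w = g w) \<Longrightarrow> Lo br a f zs = Lo br a g zs"
  unfolding Lo_def using E_cong[of zs f g br a] by simp

lemma E_add_fun: "Eo br a (\<lambda>w. f w + g w) zs = Eo br a f zs + Eo br a g zs"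
  unfolding Eo_def by (simp add: sum.distrib)

lemma E_zero_fun: "Eo br a (\<lambda>w. 0) zs = 0"
  unfolding Eo_def by simp

lemma E_mult_fun: "Eo br a (\<lambda>w. c * f w) zs = c * Eo br a f zs"
  unfolding Eo_def by (simp add: sum_distrib_left)

lemma D_Nil[simp]: "dCE br f [] = 0" by (simp add: dCE_def)

lemma D_single: "dCE br f [y] = br y (f [])" by (simp add: dCE_def del_at_def)

lemma D_cong:
  assumes "length zs = Suc m" "\<And>w. length w = m \<Longrightarrow> f w = g w"
  shows "dCE br f zs = dCE br g zs"
proof -
  have a: "(\<Sum>j<length zs. \<Sum>i<j. f (br (zs ! i) (zs ! j) # del_at i (del_at j zs)))
     = (\<Sum>j<length zs. \<Sum>i<j. g (br (zs ! i) (zs ! j) # del_at i (del_at j zs)))"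
  proof (intro sum.cong refl)
    fix j i assume j: "j \<in> {..<length zs}" and i: "i \<in> {..<j}"
    have "length (del_at j zs) = m" using j assms(1) by simp
    moreover have "i < length (del_at j zs)" using i j assms(1) by simp
    ultimately have "length (br (zs ! i) (zs ! j) # del_at i (del_at j zs)) = m"
      using i j by simp
    then show "f (br (zs ! i) (zs ! j) # del_at i (del_at j zs)) = g (br (zs ! i) (zs ! j) # del_at i (del_at j zs))"
      using assms(2) by blast
  qed
  have b: "(\<Sum>i<length zs. br (zs ! i) (f (del_at i zs))) = (\<Sum>i<length zs. br (zs ! i) (g (del_at i zs)))"
    using assms by (intro sum.cong refl) simp
  show ?thesis unfolding dCE_def using a b by simp
qed


lemma D_Cons_raw: "dCE br f (x # ys) =
   (\<Sum>k<length ys. f (br x (ys ! k) # del_at k ys)) + br x (f ys)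
   + (\<Sum>j<length ys. \<Sum>i<j. f (br (ys ! i) (ys ! j) # x # del_at i (del_at j ys)))
   + (\<Sum>k<length ys. br (ys ! k) (f (x # del_at k ys)))"
  unfolding dCE_def by (simp only: length_Cons sum.lessThan_Suc_shift) (simp add: sum.distrib add_ac)


context restricted_poisson_algebra begin

lemma D_cong2:
  assumes "\<And>w. Suc (length w) = length zs \<Longrightarrow> f w = g w"
  shows "dCE br f zs = dCE br g zs"
proof (cases zs)
  case Nil then show ?thesis by simp
next
  case (Cons z zs')
  show ?thesis by (rule D_cong[of zs "length zs'"]) (use Cons assms in simp_all)
qed

lemma D_add_fun: "dCE br (\<lambda>w. f w + g w) zs = dCE br f zs + dCE br g zs"
  unfolding dCE_def by (simp add: sum.distrib br_add_right add_ac)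

lemma D_zero_fun: "dCE br (\<lambda>w. 0) zs = 0"
  unfolding dCE_def by simp

lemma D_scale_fun: "dCE br (\<lambda>w. scale c (f w)) zs = scale c (dCE br f zs)"
  unfolding dCE_def by (simp add: scale_sum_right br_scale_right scale_right_distrib)

lemma D_mult_fun: "dCE br (\<lambda>w. c * f w) zs = c * dCE br f zs + (\<Sum>i<length zs. br (zs ! i) c * f (del_at i zs))"
  unfolding dCE_def by (simp add: sum_distrib_left br_leib_right sum.distrib distrib_left add_ac mult.commute)

lemma E_scale_fun: "Eo br a (\<lambda>w. scale c (f w)) zs = scale c (Eo br a f zs)"
  unfolding Eo_def by (simp add: scale_sum_right)

lemma E_br_fun: "Eo br a (\<lambda>w. br b (f w)) zs = br b (Eo br a f zs)"
  unfolding Eo_def by (simp add: br_sum_right)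

lemma L_add_fun: "Lo br a (\<lambda>w. f w + g w) zs = Lo br a f zs + Lo br a g zs"
  unfolding Lo_def by (simp add: E_add_fun br_add_right add_ac)

lemma L_zero_fun: "Lo br a (\<lambda>w. 0) zs = 0"
  unfolding Lo_def by (simp add: E_zero_fun)

lemma L_mult_fun: "Lo br a (\<lambda>w. c * f w) zs = c * Lo br a f zs + br a c * f zs"
  unfolding Lo_def by (simp add: E_mult_fun br_leib_right distrib_left add_ac mult.commute)

lemma L_scale_fun: "Lo br a (\<lambda>w. scale c (f w)) zs = scale c (Lo br a f zs)"
  unfolding Lo_def by (simp add: E_scale_fun br_scale_right scale_right_distrib)

lemma symm_ct: "symm (Suc k) f \<Longrightarrow> symm k (ct x f)"
  unfolding symm_def by simp

lemma symm_add: "symm k f \<Longrightarrow> symm k g \<Longrightarrow> symm k (\<lambda>w. f w + g w)"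
  unfolding symm_def[of k "\<lambda>w. f w + g w"]
proof (intro allI impI)
  fix xs ys :: "'b list" assume a: "symm k f" "symm k g" "length xs = k" "mset ys = mset xs"
  show "f ys + g ys = f xs + g xs" using symmD[OF a(1) a(3) a(4)] symmD[OF a(2) a(3) a(4)] by simp
qed

lemma symm_comp: "symm k f \<Longrightarrow> symm k (\<lambda>w. h (f w))"
  unfolding symm_def[of k "\<lambda>w. h (f w)"] by (auto dest: symmD)

lemma symm_cong: "symm k f \<Longrightarrow> (\<And>w. length w = k \<Longrightarrow> f w = g w) \<Longrightarrow> symm k g"
  unfolding symm_def[of k g]
proof (intro allI impI)
  fix xs ys :: "'b list" assume a: "symm k f" "\<And>w. length w = k \<Longrightarrow> f w = g w" "length xs = k" "mset ys = mset xs"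
  have "length ys = length xs" using a(4) by (rule mset_eq_length)
  then show "g ys = g xs" using a symmD[OF a(1) a(3) a(4)] by simp
qed

lemma symm_swap: "symm k f \<Longrightarrow> Suc (Suc (length zs)) = k \<Longrightarrow> f (y # x # zs) = f (x # y # zs)"
  by (rule symmD) auto

lemma symm_E: "symm k f \<Longrightarrow> symm k (Eo br a f)"
proof (induction k arbitrary: f)
  case 0 then show ?case by (simp add: symm_le1)
next
  case (Suc k)
  show ?case
  proof (rule symm_cons_intro)
    fix y
    have "symm k (\<lambda>zs. f (br a y # zs) + Eo br a (ct y f) zs)"
      using symm_add[OF symm_ct[OF Suc.prems] Suc.IH[OF symm_ct[OF Suc.prems]]] by (simp add: ct_def)
    then show "symm k (\<lambda>zs. Eo br a f (y # zs))" by (simp add: E_Cons)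
  next
    fix x y :: 'a and zs :: "'a list" assume l: "Suc (Suc (length zs)) = Suc k"
    have e1: "Eo br a f (x # y # zs) = f (br a x # y # zs) + f (x # br a y # zs) + Eo br a (ct y (ct x f)) zs"
      by (simp add: E_Cons add.assoc)
    have e2: "Eo br a f (y # x # zs) = f (br a y # x # zs) + f (y # br a x # zs) + Eo br a (ct x (ct y f)) zs"
      by (simp add: E_Cons add.assoc)
    have "Eo br a (ct y (ct x f)) zs = Eo br a (ct x (ct y f)) zs"
    proof (rule E_cong)
      fix w :: "'a list" assume "length w = length zs"
      then show "ct y (ct x f) w = ct x (ct y f) w" using symm_swap[OF Suc.prems, of w y x] l by simp
    qed
    moreover have "f (br a x # y # zs) = f (y # br a x # zs)" using symm_swap[OF Suc.prems, of zs "br a x" y] l by simp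
    moreover have "f (x # br a y # zs) = f (br a y # x # zs)" using symm_swap[OF Suc.prems, of zs x "br a y"] l by simp
    ultimately show "Eo br a f (x # y # zs) = Eo br a f (y # x # zs)" using e1 e2 by (simp add: add_ac)
  qed
qed

lemma symm_L: "symm k f \<Longrightarrow> symm k (Lo br a f)"
  unfolding Lo_def by (rule symm_add[OF symm_comp symm_E])

lemma D_Cons:
  assumes "symm (length ys) f"
  shows "dCE br f (x # ys) = Lo br x f ys + dCE br (ct x f) ys"
proof -
  have a: "(\<Sum>k<length ys. f (br x (ys ! k) # del_at k ys)) = Eo br x f ys"
    unfolding Eo_def by (intro sum.cong refl) (simp add: symm_upd[OF assms])
  have b: "(\<Sum>j<length ys. \<Sum>i<j. f (br (ys ! i) (ys ! j) # x # del_at i (del_at j ys)))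
     = (\<Sum>j<length ys. \<Sum>i<j. f (x # br (ys ! i) (ys ! j) # del_at i (del_at j ys)))"
  proof (intro sum.cong refl)
    fix j i assume j: "j \<in> {..<length ys}" and i: "i \<in> {..<j}"
    have "Suc (Suc (length (del_at i (del_at j ys)))) = length ys" using i j by simp
    then show "f (br (ys ! i) (ys ! j) # x # del_at i (del_at j ys)) = f (x # br (ys ! i) (ys ! j) # del_at i (del_at j ys))"
      using symm_swap[OF assms, of "del_at i (del_at j ys)" x "br (ys ! i) (ys ! j)"] by simp
  qed
  show ?thesis unfolding D_Cons_raw a b by (simp add: Lo_def dCE_def add_ac)
qed

lemma D_Cons2:
  assumes "symm (Suc (length zs)) f"
  shows "dCE br f (x # y # zs) = br x (f (y # zs)) + br y (f (x # zs)) + f (br x y # zs)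
     + Eo br x (ct y f) zs + Eo br y (ct x f) zs + dCE br (ct y (ct x f)) zs"
proof -
  have s1: "symm (length (y # zs)) f" using assms by simp
  have s2: "symm (length zs) (ct x f)" using symm_ct[OF assms] .
  show ?thesis unfolding D_Cons[OF s1] D_Cons[OF s2] L_Cons by (simp add: Lo_def add_ac)
qed

lemma symm_D: "symm k f \<Longrightarrow> symm (Suc k) (dCE br f)"
proof (induction k arbitrary: f)
  case 0 then show ?case by (simp add: symm_le1)
next
  case (Suc k)
  show ?case
  proof (rule symm_cons_intro)
    fix x
    have "symm (Suc k) (\<lambda>ys. Lo br x f ys + dCE br (ct x f) ys)"
      by (intro symm_add symm_L Suc.prems Suc.IH symm_ct)
    then show "symm (Suc k) (\<lambda>ys. dCE br f (x # ys))"
      by (rule symm_cong) (simp add: D_Cons Suc.prems)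
  next
    fix x y :: 'a and zs :: "'a list" assume l: "Suc (Suc (length zs)) = Suc (Suc k)"
    have s: "symm (Suc (length zs)) f" using Suc.prems l by simp
    have "dCE br (ct y (ct x f)) zs = dCE br (ct x (ct y f)) zs"
    proof (rule D_cong2)
      fix w :: "'a list" assume "Suc (length w) = length zs"
      then show "ct y (ct x f) w = ct x (ct y f) w" using symm_swap[OF Suc.prems, of w y x] l by simp
    qed
    then show "dCE br f (x # y # zs) = dCE br f (y # x # zs)"
      unfolding D_Cons2[OF s] by (simp add: br_sym[of x y] add_ac)
  qed
qed

end

definition md :: "('k::field \<Rightarrow> 'a::comm_ring \<Rightarrow> 'a) \<Rightarrow> nat \<Rightarrow> ('a list \<Rightarrow> 'a) \<Rightarrow> bool" where
  "md scale k f \<longleftrightarrow> symm k f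
     \<and> (\<forall>a b ys. Suc (length ys) = k \<longrightarrow> f ((a + b) # ys) = f (a # ys) + f (b # ys))
     \<and> (\<forall>c a ys. Suc (length ys) = k \<longrightarrow> f (scale c a # ys) = scale c (f (a # ys)))
     \<and> (\<forall>a b ys. Suc (length ys) = k \<longrightarrow> f ((a * b) # ys) = a * f (b # ys) + b * f (a # ys))
     \<and> (\<forall>a ys. Suc (Suc (length ys)) = k \<longrightarrow> f (a # a # ys) = 0)"

lemma mdI:
  assumes "symm k f"
    and "\<And>a b ys. Suc (length ys) = k \<Longrightarrow> f ((a + b) # ys) = f (a # ys) + f (b # ys)"
    and "\<And>c a ys. Suc (length ys) = k \<Longrightarrow> f (scale c a # ys) = scale c (f (a # ys))"
    and "\<And>a b ys. Suc (length ys) = k \<Longrightarrow> f ((a * b) # ys) = a * f (b # ys) + b * f (a # ys)"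
    and "\<And>a ys. Suc (Suc (length ys)) = k \<Longrightarrow> f (a # a # ys) = 0"
  shows "md scale k f"
  unfolding md_def using assms by blast

lemma md_symm: "md scale k f \<Longrightarrow> symm k f" unfolding md_def by blast
lemma md_add0: "md scale k f \<Longrightarrow> Suc (length ys) = k \<Longrightarrow> f ((a + b) # ys) = f (a # ys) + f (b # ys)"
  unfolding md_def by blast
lemma md_hom0: "md scale k f \<Longrightarrow> Suc (length ys) = k \<Longrightarrow> f (scale c a # ys) = scale c (f (a # ys))"
  unfolding md_def by blast
lemma md_der0: "md scale k f \<Longrightarrow> Suc (length ys) = k \<Longrightarrow> f ((a * b) # ys) = a * f (b # ys) + b * f (a # ys)"
  unfolding md_def by blast
lemma md_alt0: "md scale k f \<Longrightarrow> Suc (Suc (length ys)) = k \<Longrightarrow> f (a # a # ys) = 0"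
  unfolding md_def by blast

lemma md_upd: "md scale k f \<Longrightarrow> length xs = k \<Longrightarrow> i < k \<Longrightarrow> f (xs[i := c]) = f (c # del_at i xs)"
  by (rule symm_upd[OF md_symm])

lemma md_len: "length xs = k \<Longrightarrow> i < k \<Longrightarrow> Suc (length (del_at i xs)) = k"
  by simp

lemma md_addv: "md scale k f \<Longrightarrow> length xs = k \<Longrightarrow> i < k \<Longrightarrow> f (xs[i := a + b]) = f (xs[i := a]) + f (xs[i := b])"
  by (simp add: md_upd md_add0[OF _ md_len])

lemma md_homv: "md scale k f \<Longrightarrow> length xs = k \<Longrightarrow> i < k \<Longrightarrow> f (xs[i := scale c a]) = scale c (f (xs[i := a]))"
  by (simp add: md_upd md_hom0[OF _ md_len])

lemma md_derv: "md scale k f \<Longrightarrow> length xs = k \<Longrightarrow> i < k \<Longrightarrow> f (xs[i := a * b]) = a * f (xs[i := b]) + b * f (xs[i := a])"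
  by (simp add: md_upd md_der0[OF _ md_len])

lemma md_altv: fixes f :: "'a::comm_ring list \<Rightarrow> 'a" assumes "md scale k f" shows "alternating_on k f"
  unfolding alternating_on_def
proof (intro allI impI)
  fix xs :: "'a list" and i j assume l: "length xs = k" and ij: "i < j" "j < k" and e: "xs ! i = xs ! j"
  define ys where "ys = del_at j xs"
  have "f xs = f (xs[j := xs ! j])" by simp
  also have "\<dots> = f (xs ! j # ys)" unfolding ys_def using md_upd[OF assms l ij(2)] .
  finally have 1: "f xs = f (xs ! j # ys)" .
  have ly: "length ys = k - 1" "i < length ys" using l ij by (simp_all add: ys_def)
  have yi: "ys ! i = xs ! j" using nth_del_at_less[OF ij(1), of xs] ij l e by (simp add: ys_def)
  have "mset (xs ! j # ys) = mset (xs ! j # xs ! j # del_at i ys)"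
    using mset_del_at[OF ly(2)] yi by simp
  then have "f (xs ! j # ys) = f (xs ! j # xs ! j # del_at i ys)"
    using symmD[OF md_symm[OF assms], of "xs ! j # xs ! j # del_at i ys" "xs ! j # ys"] ly ij by simp
  also have "\<dots> = 0" by (rule md_alt0[OF assms]) (use ly ij in simp)
  finally show "f xs = 0" using 1 by simp
qed

lemma md_multider: "md scale k f \<Longrightarrow> multiderivation scale k f"
  unfolding multiderivation_def multilinear_on_def derivation_slots_def
  by (simp add: md_altv md_addv md_homv md_derv)

context restricted_poisson_algebra begin

lemma alt_add_symm:
  fixes f :: "'a list \<Rightarrow> 'a"
  shows "alternating_on k f \<Longrightarrow> (\<forall>xs i a b. length xs = k \<longrightarrow> i < k \<longrightarrow> f (xs[i := a + b]) = f (xs[i := a]) + f (xs[i := b])) \<Longrightarrow> symm k f"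
proof (induction k arbitrary: f)
  case 0 then show ?case by (simp add: symm_le1)
next
  case (Suc k)
  show ?case
  proof (rule symm_cons_intro)
    fix x
    have "alternating_on k (ct x f)"
      unfolding alternating_on_def
    proof (intro allI impI)
      fix xs :: "'a list" and i j assume "length xs = k" "i < j" "j < k" "xs ! i = xs ! j"
      then show "ct x f xs = 0"
        using Suc.prems(1)[unfolded alternating_on_def, rule_format, of "x # xs" "Suc i" "Suc j"] by simp
    qed
    moreover have "\<forall>xs i a b. length xs = k \<longrightarrow> i < k \<longrightarrow> ct x f (xs[i := a + b]) = ct x f (xs[i := a]) + ct x f (xs[i := b])"
    proof (intro allI impI)
      fix xs :: "'a list" and i a b assume "length xs = k" "i < k"
      then show "ct x f (xs[i := a + b]) = ct x f (xs[i := a]) + ct x f (xs[i := b])"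
        using Suc.prems(2)[rule_format, of "x # xs" "Suc i" a b] by simp
    qed
    ultimately show "symm k (\<lambda>zs. f (x # zs))" using Suc.IH[of "ct x f"] by (simp add: ct_def)
  next
    fix x y :: 'a and zs :: "'a list" assume l: "Suc (Suc (length zs)) = Suc k"
    have A: "\<And>xs i a b. length xs = Suc k \<Longrightarrow> i < Suc k \<Longrightarrow> f (xs[i := a + b]) = f (xs[i := a]) + f (xs[i := b])"
      using Suc.prems(2) by blast
    have z: "f ((x + y) # (x + y) # zs) = 0"
      using Suc.prems(1)[unfolded alternating_on_def, rule_format, of "(x + y) # (x + y) # zs" 0 1] l by simp
    have a1: "f ((x + y) # (x + y) # zs) = f (x # (x + y) # zs) + f (y # (x + y) # zs)"
      using A[of "(x + y) # (x + y) # zs" 0 x y] l by simp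
    have a2: "f (x # (x + y) # zs) = f (x # x # zs) + f (x # y # zs)"
      using A[of "x # (x + y) # zs" 1 x y] l by simp
    have a3: "f (y # (x + y) # zs) = f (y # x # zs) + f (y # y # zs)"
      using A[of "y # (x + y) # zs" 1 x y] l by simp
    have zx: "f (x # x # zs) = 0"
      using Suc.prems(1)[unfolded alternating_on_def, rule_format, of "x # x # zs" 0 1] l by simp
    have zy: "f (y # y # zs) = 0"
      using Suc.prems(1)[unfolded alternating_on_def, rule_format, of "y # y # zs" 0 1] l by simp
    have "f (x # y # zs) + f (y # x # zs) = 0" using z a1 a2 a3 zx zy by simp
    then show "f (x # y # zs) = f (y # x # zs)" by (subst eq_iff_add0)
  qed
qed

lemma multider_md: fixes f :: "'a list \<Rightarrow> 'a" assumes "multiderivation scale k f" shows "md scale k f"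
proof -
  have al: "alternating_on k f" and ml: "multilinear_on scale k f" and dr: "derivation_slots k f"
    using assms unfolding multiderivation_def by auto
  have av: "\<forall>xs i a b. length xs = k \<longrightarrow> i < k \<longrightarrow> f (xs[i := a + b]) = f (xs[i := a]) + f (xs[i := b])"
    using ml unfolding multilinear_on_def by blast
  show ?thesis
  proof (rule mdI)
    show "symm k f" by (rule alt_add_symm[OF al av])
  next
    fix a b :: 'a and ys :: "'a list" assume "Suc (length ys) = k"
    then show "f ((a + b) # ys) = f (a # ys) + f (b # ys)"
      using av[rule_format, of "a # ys" 0 a b] by simp
  next
    fix c a and ys :: "'a list" assume "Suc (length ys) = k"
    then show "f (scale c a # ys) = scale c (f (a # ys))"
      using conjunct2[OF ml[unfolded multilinear_on_def], rule_format, of "a # ys" 0 c a] by simp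
  next
    fix a b :: 'a and ys :: "'a list" assume "Suc (length ys) = k"
    then show "f ((a * b) # ys) = a * f (b # ys) + b * f (a # ys)"
      using dr[unfolded derivation_slots_def, rule_format, of "a # ys" 0 a b] by simp
  next
    fix a :: 'a and ys :: "'a list" assume "Suc (Suc (length ys)) = k"
    then show "f (a # a # ys) = 0"
      using al[unfolded alternating_on_def, rule_format, of "a # a # ys" 0 1] by simp
  qed
qed

end

context restricted_poisson_algebra begin

lemma md_cong:
  assumes "md scale k f" "\<And>w. length w = k \<Longrightarrow> f w = g w"
  shows "md scale k g"
proof (rule mdI)
  show "symm k g" by (rule symm_cong[OF md_symm[OF assms(1)] assms(2)])
next
  fix a b :: 'a and ys :: "'a list" assume l: "Suc (length ys) = k"
  then show "g ((a + b) # ys) = g (a # ys) + g (b # ys)"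
    using md_add0[OF assms(1) l, of a b] assms(2) by simp
next
  fix c a and ys :: "'a list" assume l: "Suc (length ys) = k"
  then show "g (scale c a # ys) = scale c (g (a # ys))"
    using md_hom0[OF assms(1) l, of c a] assms(2) by simp
next
  fix a b :: 'a and ys :: "'a list" assume l: "Suc (length ys) = k"
  then show "g ((a * b) # ys) = a * g (b # ys) + b * g (a # ys)"
    using md_der0[OF assms(1) l, of a b] assms(2) by simp
next
  fix a :: 'a and ys :: "'a list" assume l: "Suc (Suc (length ys)) = k"
  then show "g (a # a # ys) = 0"
    using md_alt0[OF assms(1) l, of a] assms(2) by simp
qed

lemma md_swap: "md scale k f \<Longrightarrow> Suc (Suc (length zs)) = k \<Longrightarrow> f (y # x # zs) = f (x # y # zs)"
  by (rule symm_swap[OF md_symm])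

lemma md_ct:
  assumes "md scale (Suc k) f"
  shows "md scale k (ct x f)"
proof (rule mdI)
  show "symm k (ct x f)" by (rule symm_ct[OF md_symm[OF assms]])
next
  fix a b :: 'a and ys :: "'a list" assume l: "Suc (length ys) = k"
  have s: "\<And>v. f (x # v # ys) = f (v # x # ys)" using md_swap[OF assms, of "ys"] l by simp
  show "ct x f ((a + b) # ys) = ct x f (a # ys) + ct x f (b # ys)"
    using md_add0[OF assms, of "x # ys" a b] l by (simp add: s)
next
  fix c a and ys :: "'a list" assume l: "Suc (length ys) = k"
  have s: "\<And>v. f (x # v # ys) = f (v # x # ys)" using md_swap[OF assms, of "ys"] l by simp
  show "ct x f (scale c a # ys) = scale c (ct x f (a # ys))"
    using md_hom0[OF assms, of "x # ys" c a] l by (simp add: s)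
next
  fix a b :: 'a and ys :: "'a list" assume l: "Suc (length ys) = k"
  have s: "\<And>v. f (x # v # ys) = f (v # x # ys)" using md_swap[OF assms, of "ys"] l by simp
  show "ct x f ((a * b) # ys) = a * ct x f (b # ys) + b * ct x f (a # ys)"
    using md_der0[OF assms, of "x # ys" a b] l by (simp add: s)
next
  fix a :: 'a and ys :: "'a list" assume l: "Suc (Suc (length ys)) = k"
  have "mset (x # a # a # ys) = mset (a # a # x # ys)" by simp
  then have "f (x # a # a # ys) = f (a # a # x # ys)"
    using symmD[OF md_symm[OF assms], of "a # a # x # ys" "x # a # a # ys"] l by simp
  then show "ct x f (a # a # ys) = 0" using md_alt0[OF assms, of "x # ys" a] l by simp
qed

lemma md_add:
  assumes "md scale k f" "md scale k g"
  shows "md scale k (\<lambda>w. f w + g w)"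
proof (rule mdI)
  show "symm k (\<lambda>w. f w + g w)" by (rule symm_add[OF md_symm[OF assms(1)] md_symm[OF assms(2)]])
next
  fix a b :: 'a and ys :: "'a list" assume l: "Suc (length ys) = k"
  then show "f ((a + b) # ys) + g ((a + b) # ys) = f (a # ys) + g (a # ys) + (f (b # ys) + g (b # ys))"
    using md_add0[OF assms(1) l, of a b] md_add0[OF assms(2) l, of a b] by (simp add: add_ac)
next
  fix c a and ys :: "'a list" assume l: "Suc (length ys) = k"
  then show "f (scale c a # ys) + g (scale c a # ys) = scale c (f (a # ys) + g (a # ys))"
    using md_hom0[OF assms(1) l, of c a] md_hom0[OF assms(2) l, of c a] by (simp add: scale_right_distrib)
next
  fix a b :: 'a and ys :: "'a list" assume l: "Suc (length ys) = k"
  then show "f ((a * b) # ys) + g ((a * b) # ys) = a * (f (b # ys) + g (b # ys)) + b * (f (a # ys) + g (a # ys))"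
    using md_der0[OF assms(1) l, of a b] md_der0[OF assms(2) l, of a b] by (simp add: algebra_simps)
next
  fix a :: 'a and ys :: "'a list" assume l: "Suc (Suc (length ys)) = k"
  then show "f (a # a # ys) + g (a # a # ys) = 0"
    using md_alt0[OF assms(1) l, of a] md_alt0[OF assms(2) l, of a] by simp
qed

lemma md_zero0: "md scale k f \<Longrightarrow> Suc (length ys) = k \<Longrightarrow> f (0 # ys) = 0"
  using md_add0[of scale k f ys 0 0] by simp

lemma L_add_arg:
  assumes "md scale k f" "length ys = k"
  shows "Lo br (a + b) f ys = Lo br a f ys + Lo br b f ys"
proof -
  have "Eo br (a + b) f ys = Eo br a f ys + Eo br b f ys"
    unfolding Eo_def by (simp add: sum.distrib[symmetric] br_add_left md_addv[OF assms(1)] assms(2))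
  then show ?thesis unfolding Lo_def by (simp add: br_add_left add_ac)
qed

lemma L_scale_arg:
  assumes "md scale k f" "length ys = k"
  shows "Lo br (scale c a) f ys = scale c (Lo br a f ys)"
proof -
  have "Eo br (scale c a) f ys = scale c (Eo br a f ys)"
    unfolding Eo_def by (simp add: scale_sum_right br_scale_left md_homv[OF assms(1)] assms(2))
  then show ?thesis unfolding Lo_def by (simp add: br_scale_left scale_right_distrib)
qed

lemma L_mult_arg:
  assumes "md scale k f" "length ys = k"
  shows "Lo br (a * b) f ys = a * Lo br b f ys + b * Lo br a f ys
    + (\<Sum>i<length ys. br b (ys ! i) * f (ys[i := a]) + br a (ys ! i) * f (ys[i := b]))"
proof -
  have t: "f (ys[i := br (a * b) (ys ! i)]) = a * f (ys[i := br b (ys ! i)]) + b * f (ys[i := br a (ys ! i)])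
      + (br b (ys ! i) * f (ys[i := a]) + br a (ys ! i) * f (ys[i := b]))" if i: "i < length ys" for i
  proof -
    have "f (ys[i := br (a * b) (ys ! i)]) = f (ys[i := a * br b (ys ! i)]) + f (ys[i := b * br a (ys ! i)])"
      using md_addv[OF assms(1) assms(2)] i assms(2) by (simp add: br_leibniz)
    then show ?thesis using md_derv[OF assms(1) assms(2)] i assms(2) by (simp add: add_ac)
  qed
  have "Eo br (a * b) f ys = a * Eo br b f ys + b * Eo br a f ys
    + (\<Sum>i<length ys. br b (ys ! i) * f (ys[i := a]) + br a (ys ! i) * f (ys[i := b]))"
    unfolding Eo_def by (simp add: t sum.distrib sum_distrib_left)
  then show ?thesis unfolding Lo_def by (simp add: br_leibniz distrib_left add_ac)
qed

lemma md_L: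
  assumes f: "md scale k f"
  shows "md scale k (Lo br x f)"
proof (rule mdI)
  show "symm k (Lo br x f)" by (rule symm_L[OF md_symm[OF f]])
next
  fix a b :: 'a and ys :: "'a list" assume l: "Suc (length ys) = k"
  have e: "Eo br x (ct (a + b) f) ys = Eo br x (ct a f) ys + Eo br x (ct b f) ys"
  proof -
    have "Eo br x (ct (a + b) f) ys = Eo br x (\<lambda>w. ct a f w + ct b f w) ys"
      by (rule E_cong) (use md_add0[OF f] l in simp)
    then show ?thesis by (simp add: ct_def E_add_fun)
  qed
  show "Lo br x f ((a + b) # ys) = Lo br x f (a # ys) + Lo br x f (b # ys)"
    unfolding L_Cons e using md_add0[OF f l, of a b] md_add0[OF f l, of "br x a" "br x b"]
    by (simp add: br_add_right add_ac)
next
  fix c a and ys :: "'a list" assume l: "Suc (length ys) = k"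
  have e: "Eo br x (ct (scale c a) f) ys = scale c (Eo br x (ct a f) ys)"
  proof -
    have "Eo br x (ct (scale c a) f) ys = Eo br x (\<lambda>w. scale c (ct a f w)) ys"
      by (rule E_cong) (use md_hom0[OF f] l in simp)
    then show ?thesis by (simp add: ct_def E_scale_fun)
  qed
  show "Lo br x f (scale c a # ys) = scale c (Lo br x f (a # ys))"
    unfolding L_Cons e using md_hom0[OF f l, of c a] md_hom0[OF f l, of c "br x a"]
    by (simp add: br_scale_right scale_right_distrib)
next
  fix a b :: 'a and ys :: "'a list" assume l: "Suc (length ys) = k"
  have e: "Eo br x (ct (a * b) f) ys = a * Eo br x (ct b f) ys + b * Eo br x (ct a f) ys"
  proof -
    have "Eo br x (ct (a * b) f) ys = Eo br x (\<lambda>w. a * ct b f w + b * ct a f w) ys"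
      by (rule E_cong) (use md_der0[OF f] l in simp)
    then show ?thesis by (simp add: ct_def E_add_fun E_mult_fun)
  qed
  have d1: "f (br x (a * b) # ys) = a * f (br x b # ys) + br x b * f (a # ys) + (b * f (br x a # ys) + br x a * f (b # ys))"
    using md_add0[OF f l, of "a * br x b" "b * br x a"] md_der0[OF f l] by (simp add: br_leib_right)
  show "Lo br x f ((a * b) # ys) = a * Lo br x f (b # ys) + b * Lo br x f (a # ys)"
    unfolding L_Cons e d1 md_der0[OF f l, of a b]
    by (simp add: br_leib_right br_add_right algebra_simps)
next
  fix a :: 'a and ys :: "'a list" assume l: "Suc (Suc (length ys)) = k"
  have e: "Eo br x (ct a (ct a f)) ys = 0"
  proof -
    have "Eo br x (ct a (ct a f)) ys = Eo br x (\<lambda>w. 0) ys"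
      by (rule E_cong) (use md_alt0[OF f] l in simp)
    then show ?thesis by (simp add: ct_def E_zero_fun)
  qed
  have s: "f (br x a # a # ys) = f (a # br x a # ys)" using md_swap[OF f l] .
  show "Lo br x f (a # a # ys) = 0"
    unfolding L_Cons using E_Cons[of br x "ct a f" a ys] e s md_alt0[OF f l, of a] by simp
qed

lemma md_D:
  assumes f: "md scale k f"
  shows "md scale (Suc k) (dCE br f)"
proof (rule mdI)
  show "symm (Suc k) (dCE br f)" by (rule symm_D[OF md_symm[OF f]])
next
  fix a b :: 'a and ys :: "'a list" assume l: "Suc (length ys) = Suc k"
  have sy: "symm (length ys) f" using md_symm[OF f] l by simp
  have e: "dCE br (ct (a + b) f) ys = dCE br (ct a f) ys + dCE br (ct b f) ys"
  proof -
    have "dCE br (ct (a + b) f) ys = dCE br (\<lambda>w. ct a f w + ct b f w) ys"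
      by (rule D_cong2) (use md_add0[OF f] l in simp)
    then show ?thesis by (simp add: ct_def D_add_fun)
  qed
  show "dCE br f ((a + b) # ys) = dCE br f (a # ys) + dCE br f (b # ys)"
    unfolding D_Cons[OF sy] e L_add_arg[OF f, of ys a b, OF l[simplified]] by (simp add: add_ac)
next
  fix c a and ys :: "'a list" assume l: "Suc (length ys) = Suc k"
  have sy: "symm (length ys) f" using md_symm[OF f] l by simp
  have e: "dCE br (ct (scale c a) f) ys = scale c (dCE br (ct a f) ys)"
  proof -
    have "dCE br (ct (scale c a) f) ys = dCE br (\<lambda>w. scale c (ct a f w)) ys"
      by (rule D_cong2) (use md_hom0[OF f] l in simp)
    then show ?thesis by (simp add: ct_def D_scale_fun)
  qed
  show "dCE br f (scale c a # ys) = scale c (dCE br f (a # ys))"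
    unfolding D_Cons[OF sy] e using L_scale_arg[OF f, of ys c a, OF l[simplified]] by (simp add: scale_right_distrib)
next
  fix a b :: 'a and ys :: "'a list" assume l: "Suc (length ys) = Suc k"
  have sy: "symm (length ys) f" using md_symm[OF f] l by simp
  have lk: "length ys = k" using l by simp
  have e: "dCE br (ct (a * b) f) ys = a * dCE br (ct b f) ys + (\<Sum>i<length ys. br (ys ! i) a * f (b # del_at i ys))
     + (b * dCE br (ct a f) ys + (\<Sum>i<length ys. br (ys ! i) b * f (a # del_at i ys)))"
  proof -
    have "dCE br (ct (a * b) f) ys = dCE br (\<lambda>w. a * ct b f w + b * ct a f w) ys"
      by (rule D_cong2) (use md_der0[OF f] l in simp)
    then show ?thesis by (simp add: ct_def D_add_fun D_mult_fun)
  qed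
  have cancel: "(\<Sum>i<length ys. br b (ys ! i) * f (ys[i := a]) + br a (ys ! i) * f (ys[i := b]))
     + (\<Sum>i<length ys. br (ys ! i) a * f (b # del_at i ys)) + (\<Sum>i<length ys. br (ys ! i) b * f (a # del_at i ys)) = 0"
  proof -
    have "(\<Sum>i<length ys. br b (ys ! i) * f (ys[i := a]) + br a (ys ! i) * f (ys[i := b]))
       = (\<Sum>i<length ys. br (ys ! i) b * f (a # del_at i ys) + br (ys ! i) a * f (b # del_at i ys))"
      by (intro sum.cong refl) (simp add: md_upd[OF f lk] lk br_sym[of _ "ys ! _"])
    then show ?thesis by (simp add: sum.distrib[symmetric] C2)
  qed
  show "dCE br f ((a * b) # ys) = a * dCE br f (b # ys) + b * dCE br f (a # ys)"
    unfolding D_Cons[OF sy] e L_mult_arg[OF f lk]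
    using cancel by (simp add: distrib_left C2)
next
  fix a :: 'a and ys :: "'a list" assume l: "Suc (Suc (length ys)) = Suc k"
  have sy: "symm (Suc (length ys)) f" using md_symm[OF f] l by simp
  have e: "dCE br (ct a (ct a f)) ys = 0"
  proof -
    have "dCE br (ct a (ct a f)) ys = dCE br (\<lambda>w. 0) ys"
      by (rule D_cong2) (use md_alt0[OF f] l in simp)
    then show ?thesis by (simp add: ct_def D_zero_fun)
  qed
  show "dCE br f (a # a # ys) = 0"
    unfolding D_Cons2[OF sy] e using md_zero0[OF f, of ys] l by (simp add: br_alt)
qed

end

lemma Lo_eta: "Lo br a f = (\<lambda>zs. br a (f zs) + Eo br a f zs)"
  by (rule ext) (simp add: Lo_def)

lemma E_E_expand: "Eo br x (Eo br y f) zs = (\<Sum>k<length zs. \<Sum>l<length zs.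
   if l = k then f (zs[k := br y (br x (zs ! k))]) else f (zs[k := br x (zs ! k), l := br y (zs ! l)]))"
  unfolding Eo_def by (intro sum.cong refl) (auto simp: nth_list_update)

context restricted_poisson_algebra begin

lemma E_comm:
  assumes f: "md scale k f" and l: "length zs = k"
  shows "Eo br x (Eo br y f) zs + Eo br y (Eo br x f) zs = Eo br (br x y) f zs"
proof -
  let ?n = "length zs"
  have B: "Eo br y (Eo br x f) zs = (\<Sum>k<?n. \<Sum>l<?n.
     if l = k then f (zs[k := br x (br y (zs ! k))]) else f (zs[k := br x (zs ! k), l := br y (zs ! l)]))"
  proof -
    have "Eo br y (Eo br x f) zs = (\<Sum>l<?n. \<Sum>k<?n.
     if k = l then f (zs[l := br x (br y (zs ! l))]) else f (zs[l := br y (zs ! l), k := br x (zs ! k)]))"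
      by (rule E_E_expand)
    also have "\<dots> = (\<Sum>k<?n. \<Sum>l<?n.
     if k = l then f (zs[l := br x (br y (zs ! l))]) else f (zs[l := br y (zs ! l), k := br x (zs ! k)]))"
      by (rule sum.swap)
    also have "\<dots> = (\<Sum>k<?n. \<Sum>l<?n.
     if l = k then f (zs[k := br x (br y (zs ! k))]) else f (zs[k := br x (zs ! k), l := br y (zs ! l)]))"
    proof (intro sum.cong refl)
      fix k l assume "k \<in> {..<?n}" "l \<in> {..<?n}"
      show "(if k = l then f (zs[l := br x (br y (zs ! l))]) else f (zs[l := br y (zs ! l), k := br x (zs ! k)]))
          = (if l = k then f (zs[k := br x (br y (zs ! k))]) else f (zs[k := br x (zs ! k), l := br y (zs ! l)]))"
        by (cases "k = l") (simp_all add: list_update_swap[of l k])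
    qed
    finally show ?thesis .
  qed
  have "Eo br x (Eo br y f) zs + Eo br y (Eo br x f) zs = (\<Sum>k<?n. \<Sum>l<?n.
     if l = k then f (zs[k := br y (br x (zs ! k))]) + f (zs[k := br x (br y (zs ! k))]) else 0)"
    unfolding B E_E_expand[of br x y f zs] sum.distrib[symmetric] by (intro sum.cong refl) simp
  also have "\<dots> = (\<Sum>k<?n. f (zs[k := br y (br x (zs ! k))]) + f (zs[k := br x (br y (zs ! k))]))"
    by (simp add: sum.delta)
  also have "\<dots> = (\<Sum>k<?n. f (zs[k := br (br x y) (zs ! k)]))"
  proof (intro sum.cong refl)
    fix i assume i: "i \<in> {..<?n}"
    have "f (zs[i := br y (br x (zs ! i))]) + f (zs[i := br x (br y (zs ! i))])
       = f (zs[i := br y (br x (zs ! i)) + br x (br y (zs ! i))])"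
      using md_addv[OF f l, of i] i l by simp
    also have "br y (br x (zs ! i)) + br x (br y (zs ! i)) = br (br x y) (zs ! i)"
      using jac[of x y "zs ! i"] by (simp add: add.commute)
    finally show "f (zs[i := br y (br x (zs ! i))]) + f (zs[i := br x (br y (zs ! i))]) = f (zs[i := br (br x y) (zs ! i)])" .
  qed
  finally show ?thesis unfolding Eo_def .
qed

lemma E_sq:
  shows "Eo br x (Eo br x f) zs = Eo br (sq x) f zs"
proof -
  let ?n = "length zs"
  have "Eo br x (Eo br x f) zs = (\<Sum>k<?n. \<Sum>l<?n.
     if l = k then f (zs[k := br x (br x (zs ! k))]) else f (zs[k := br x (zs ! k), l := br x (zs ! l)]))"
    by (rule E_E_expand)
  also have "\<dots> = (\<Sum>k<?n. if k = k then f (zs[k := br x (br x (zs ! k))]) else f (zs[k := br x (zs ! k), k := br x (zs ! k)]))"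
  proof (rule sum_sym_diag)
    fix k l
    show "(if l = k then f (zs[k := br x (br x (zs ! k))]) else f (zs[k := br x (zs ! k), l := br x (zs ! l)]))
        = (if k = l then f (zs[l := br x (br x (zs ! l))]) else f (zs[l := br x (zs ! l), k := br x (zs ! k)]))"
      by (cases "k = l") (simp_all add: list_update_swap[of l k])
  qed
  also have "\<dots> = Eo br (sq x) f zs" unfolding Eo_def by (simp add: sq_ad')
  finally show ?thesis .
qed

lemma LL_comm:
  assumes f: "md scale k f" and l: "length zs = k"
  shows "Lo br x (Lo br y f) zs + Lo br y (Lo br x f) zs = Lo br (br x y) f zs"
proof -
  have 1: "Lo br x (Lo br y f) zs = br x (br y (f zs)) + br x (Eo br y f zs) + br y (Eo br x f zs) + Eo br x (Eo br y f) zs"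
    unfolding Lo_eta[of br y f] by (simp add: Lo_def E_add_fun E_br_fun br_add_right add_ac)
  have 2: "Lo br y (Lo br x f) zs = br y (br x (f zs)) + br y (Eo br x f zs) + br x (Eo br y f zs) + Eo br y (Eo br x f) zs"
    unfolding Lo_eta[of br x f] by (simp add: Lo_def E_add_fun E_br_fun br_add_right add_ac)
  have 3: "br x (br y (f zs)) + br y (br x (f zs)) = br (br x y) (f zs)" by (rule jac)
  show ?thesis unfolding 1 2 using 3 E_comm[OF f l, of x y] by (simp add: Lo_def C2)
qed

lemma LL_sq: "Lo br x (Lo br x f) zs = Lo br (sq x) f zs"
proof -
  have 1: "Lo br x (Lo br x f) zs = br x (br x (f zs)) + br x (Eo br x f zs) + br x (Eo br x f zs) + Eo br x (Eo br x f) zs"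
    unfolding Lo_eta[of br x f] by (simp add: Lo_def E_add_fun E_br_fun br_add_right add_ac)
  show ?thesis unfolding 1 E_sq by (simp add: Lo_def sq_ad')
qed

lemma L_Cons': "Lo br x f (y # w) = Lo br x (ct y f) w + f (br x y # w)"
  by (simp only: L_Cons) (simp add: Lo_def add_ac)

lemma ct_L: "ct y (Lo br x f) w = Lo br x (ct y f) w + ct (br x y) f w"
  by (simp add: L_Cons')

lemma D_L_step:
  assumes f: "md scale k f" and l: "length ys = k"
    and H: "dCE br (Lo br x (ct y f)) ys = Lo br x (dCE br (ct y f)) ys"
  shows "Lo br x (dCE br f) (y # ys) = dCE br (Lo br x f) (y # ys)"
proof -
  have sy: "symm (length ys) f" using md_symm[OF f] l by simp
  have syL: "symm (length ys) (Lo br x f)" using symm_L[OF md_symm[OF f]] l by simp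
  have r1: "dCE br (Lo br x f) (y # ys) = Lo br y (Lo br x f) ys + dCE br (Lo br x (ct y f)) ys + dCE br (ct (br x y) f) ys"
  proof -
    have "dCE br (ct y (Lo br x f)) ys = dCE br (\<lambda>w. Lo br x (ct y f) w + ct (br x y) f w) ys"
      by (rule D_cong2) (simp add: L_Cons')
    also have "\<dots> = dCE br (Lo br x (ct y f)) ys + dCE br (ct (br x y) f) ys"
      by (rule D_add_fun)
    finally show ?thesis unfolding D_Cons[OF syL] by (simp add: add.assoc)
  qed
  have e: "Eo br x (ct y (dCE br f)) ys = Eo br x (Lo br y f) ys + Eo br x (dCE br (ct y f)) ys"
  proof -
    have "Eo br x (ct y (dCE br f)) ys = Eo br x (\<lambda>w. Lo br y f w + dCE br (ct y f) w) ys"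
      by (rule E_cong) (use md_symm[OF f] l in \<open>simp add: D_Cons\<close>)
    then show ?thesis by (simp add: E_add_fun)
  qed
  have r2: "Lo br x (dCE br f) (y # ys) = Lo br x (Lo br y f) ys + Lo br x (dCE br (ct y f)) ys
      + Lo br (br x y) f ys + dCE br (ct (br x y) f) ys"
    unfolding L_Cons e D_Cons[OF sy] by (simp add: Lo_def br_add_right add_ac)
  have c: "Lo br x (Lo br y f) ys + Lo br y (Lo br x f) ys = Lo br (br x y) f ys"
    by (rule LL_comm[OF f l])
  show ?thesis unfolding r1 r2 H using c by (subst eq_iff_add0) (simp add: C2)
qed

lemma D_L_comm:
  "md scale k f \<Longrightarrow> length zs = Suc k \<Longrightarrow> Lo br x (dCE br f) zs = dCE br (Lo br x f) zs"
proof (induction k arbitrary: f zs)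
  case 0
  then obtain y where zs: "zs = [y]" by (cases zs) auto
  show ?case unfolding zs
    by (rule D_L_step[OF 0(1)]) (simp_all add: Lo_def)
next
  case (Suc k)
  then obtain y ys where zs: "zs = y # ys" and l: "length ys = Suc k" by (cases zs) auto
  show ?case unfolding zs
    by (rule D_L_step[OF Suc.prems(1) l]) (rule Suc.IH[OF md_ct[OF Suc.prems(1)] l, symmetric])
qed

lemma DD:
  "md scale k f \<Longrightarrow> length zs = Suc (Suc k) \<Longrightarrow> dCE br (dCE br f) zs = 0"
proof (induction k arbitrary: f zs)
  case (0 f zs)
  then obtain x ys where zs: "zs = x # ys" and l: "length ys = Suc 0" by (cases zs) auto
  have sD: "symm (length ys) (dCE br f)" using symm_D[OF md_symm[OF 0(1)]] l by simp
  have a: "dCE br (ct x (dCE br f)) ys = dCE br (Lo br x f) ys + dCE br (dCE br (ct x f)) ys"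
  proof -
    have "dCE br (ct x (dCE br f)) ys = dCE br (\<lambda>w. Lo br x f w + dCE br (ct x f) w) ys"
      by (rule D_cong2) (use md_symm[OF 0(1)] l in \<open>simp add: D_Cons\<close>)
    then show ?thesis by (simp add: D_add_fun)
  qed
  obtain y where ys: "ys = [y]" using l by (cases ys) auto
  have b: "dCE br (dCE br (ct x f)) ys = 0" unfolding ys by (simp add: D_single)
  show ?case unfolding zs D_Cons[OF sD] a b D_L_comm[OF 0(1) l] by simp
next
  case (Suc k f zs)
  then obtain x ys where zs: "zs = x # ys" and l: "length ys = Suc (Suc k)" by (cases zs) auto
  have sD: "symm (length ys) (dCE br f)" using symm_D[OF md_symm[OF Suc.prems(1)]] l by simp
  have a: "dCE br (ct x (dCE br f)) ys = dCE br (Lo br x f) ys + dCE br (dCE br (ct x f)) ys"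
  proof -
    have "dCE br (ct x (dCE br f)) ys = dCE br (\<lambda>w. Lo br x f w + dCE br (ct x f) w) ys"
      by (rule D_cong2) (use md_symm[OF Suc.prems(1)] l in \<open>simp add: D_Cons\<close>)
    then show ?thesis by (simp add: D_add_fun)
  qed
  have b: "dCE br (dCE br (ct x f)) ys = 0" by (rule Suc.IH[OF md_ct[OF Suc.prems(1)] l])
  show ?case unfolding zs D_Cons[OF sD] a b D_L_comm[OF Suc.prems(1) l] by simp
qed

lemma deltaN_eq:
  assumes s: "symm (Suc (length zs)) \<phi>"
  shows "deltaN br sq \<phi> \<omega> x zs = Lo br x (ct x \<phi>) zs + \<phi> (sq x # zs) + dCE br (\<omega> x) zs"
proof -
  have a: "(\<Sum>i<length zs. \<phi> (br x (zs ! i) # x # del_at i zs)) = Eo br x (ct x \<phi>) zs"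
    unfolding Eo_def
  proof (intro sum.cong refl)
    fix i assume i: "i \<in> {..<length zs}"
    have "mset (x # zs[i := br x (zs ! i)]) = mset (br x (zs ! i) # x # del_at i zs)"
      using mset_upd_del[of i zs "br x (zs ! i)"] i by simp
    then show "\<phi> (br x (zs ! i) # x # del_at i zs) = ct x \<phi> (zs[i := br x (zs ! i)])"
      using symmD[OF s, of "br x (zs ! i) # x # del_at i zs" "x # zs[i := br x (zs ! i)]"] i by simp
  qed
  show ?thesis unfolding deltaN_def a by (simp add: Lo_def dCE_def add_ac)
qed

lemma dd_delta:
  assumes f: "md scale n \<phi>" and n: "1 \<le> n" and l: "length zs = n"
    and w: "\<And>w. length w = n - 1 \<Longrightarrow> \<omega>' x w = Lo br x (ct x \<phi>) w + \<phi> (sq x # w) + \<Omega> w"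
    and z: "dCE br \<Omega> zs = 0"
  shows "deltaN br sq (dCE br \<phi>) \<omega>' x zs = 0"
proof -
  have sD: "symm (Suc (length zs)) (dCE br \<phi>)" using symm_D[OF md_symm[OF f]] l by simp
  have sy: "symm (length zs) \<phi>" using md_symm[OF f] l by simp
  have fc: "md scale (n - 1) (ct x \<phi>)" using md_ct[of "n - 1" \<phi> x] f n by simp
  have lz: "length zs = Suc (n - 1)" using l n by simp
  have 1: "Lo br x (ct x (dCE br \<phi>)) zs = Lo br x (Lo br x \<phi>) zs + Lo br x (dCE br (ct x \<phi>)) zs"
  proof -
    have "Lo br x (ct x (dCE br \<phi>)) zs = Lo br x (\<lambda>v. Lo br x \<phi> v + dCE br (ct x \<phi>) v) zs"
      by (rule L_cong) (use md_symm[OF f] l in \<open>simp add: D_Cons\<close>)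
    then show ?thesis by (simp add: L_add_fun)
  qed
  have 2: "dCE br \<phi> (sq x # zs) = Lo br (sq x) \<phi> zs + dCE br (ct (sq x) \<phi>) zs" by (rule D_Cons[OF sy])
  have 3: "dCE br (\<omega>' x) zs = dCE br (Lo br x (ct x \<phi>)) zs + dCE br (ct (sq x) \<phi>) zs + dCE br \<Omega> zs"
  proof -
    have "dCE br (\<omega>' x) zs = dCE br (\<lambda>v. (Lo br x (ct x \<phi>) v + ct (sq x) \<phi> v) + \<Omega> v) zs"
      by (rule D_cong2) (use w l in simp)
    then show ?thesis by (simp add: ct_def D_add_fun)
  qed
  show ?thesis unfolding deltaN_eq[OF sD] 1 2 3 z LL_sq D_L_comm[OF fc lz] by (simp add: C2)
qed

end

context restricted_poisson_algebra begin

lemma V_scale: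
  assumes f: "md scale n \<phi>" and n: "1 \<le> n" and l: "length w = n - 1"
  shows "Lo br (scale c x) (ct (scale c x) \<phi>) w + \<phi> (sq (scale c x) # w)
     = scale (c ^ 2) (Lo br x (ct x \<phi>) w + \<phi> (sq x # w))"
proof -
  have fc: "md scale (n - 1) (ct x \<phi>)" using md_ct[of "n - 1" \<phi> x] f n by simp
  have "Lo br (scale c x) (ct (scale c x) \<phi>) w = Lo br (scale c x) (\<lambda>v. scale c (ct x \<phi> v)) w"
    by (rule L_cong) (use md_hom0[OF f] l n in simp)
  also have "\<dots> = scale c (Lo br (scale c x) (ct x \<phi>) w)" by (rule L_scale_fun)
  also have "\<dots> = scale (c ^ 2) (Lo br x (ct x \<phi>) w)"
    using L_scale_arg[OF fc l, of c x] by (simp add: power2_eq_square)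
  finally have 1: "Lo br (scale c x) (ct (scale c x) \<phi>) w = scale (c ^ 2) (Lo br x (ct x \<phi>) w)" .
  have 2: "\<phi> (sq (scale c x) # w) = scale (c ^ 2) (\<phi> (sq x # w))"
    using md_hom0[OF f, of w "c ^ 2" "sq x"] l n by (simp add: sq_scale)
  show ?thesis unfolding 1 2 by (simp add: scale_right_distrib)
qed

lemma D2':
  assumes f: "md scale n \<phi>" and n: "1 \<le> n" and l: "length w = n - 1"
  shows "dCE br \<phi> (x # y # w) + dCE br (ct y (ct x \<phi>)) w = Lo br x (ct y \<phi>) w + Lo br y (ct x \<phi>) w + \<phi> (br x y # w)"
proof -
  have s: "symm (Suc (length w)) \<phi>" using md_symm[OF f] l n by simp
  show ?thesis unfolding D_Cons2[OF s] by (simp add: Lo_def C2)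
qed

lemma V_add:
  assumes f: "md scale n \<phi>" and n: "1 \<le> n" and l: "length w = n - 1"
  shows "Lo br (x + y) (ct (x + y) \<phi>) w + \<phi> (sq (x + y) # w)
     = (Lo br x (ct x \<phi>) w + \<phi> (sq x # w)) + (Lo br y (ct y \<phi>) w + \<phi> (sq y # w))
       + (dCE br \<phi> (x # y # w) + dCE br (ct y (ct x \<phi>)) w)"
proof -
  have fx: "md scale (n - 1) (ct x \<phi>)" using md_ct[of "n - 1" \<phi> x] f n by simp
  have fy: "md scale (n - 1) (ct y \<phi>)" using md_ct[of "n - 1" \<phi> y] f n by simp
  have ln: "Suc (length w) = n" using l n by simp
  have "Lo br (x + y) (ct (x + y) \<phi>) w = Lo br (x + y) (\<lambda>v. ct x \<phi> v + ct y \<phi> v) w"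
    by (rule L_cong) (use md_add0[OF f] l n in simp)
  also have "\<dots> = Lo br (x + y) (ct x \<phi>) w + Lo br (x + y) (ct y \<phi>) w" by (rule L_add_fun)
  also have "\<dots> = Lo br x (ct x \<phi>) w + Lo br y (ct x \<phi>) w + (Lo br x (ct y \<phi>) w + Lo br y (ct y \<phi>) w)"
    by (simp add: L_add_arg[OF fx l] L_add_arg[OF fy l])
  finally have 1: "Lo br (x + y) (ct (x + y) \<phi>) w = Lo br x (ct x \<phi>) w + Lo br y (ct x \<phi>) w + (Lo br x (ct y \<phi>) w + Lo br y (ct y \<phi>) w)" .
  have 2: "\<phi> (sq (x + y) # w) = \<phi> (sq x # w) + \<phi> (sq y # w) + \<phi> (br x y # w)"
    by (simp add: sq_add md_add0[OF f ln])
  show ?thesis unfolding 1 2 D2'[OF f n l] by (simp add: C2)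
qed

lemma V_mult:
  assumes f: "md scale n \<phi>" and n: "1 \<le> n" and l: "length w = n - 1"
  shows "Lo br (x * y) (ct (x * y) \<phi>) w + \<phi> (sq (x * y) # w)
     = x * x * (Lo br y (ct y \<phi>) w + \<phi> (sq y # w)) + y * y * (Lo br x (ct x \<phi>) w + \<phi> (sq x # w))
       + x * y * (dCE br \<phi> (x # y # w) + dCE br (ct y (ct x \<phi>)) w)
       + (\<Sum>i<length w. br (w ! i) (x * y) * \<phi> (x # y # del_at i w))"
proof -
  have fx: "md scale (n - 1) (ct x \<phi>)" using md_ct[of "n - 1" \<phi> x] f n by simp
  have fy: "md scale (n - 1) (ct y \<phi>)" using md_ct[of "n - 1" \<phi> y] f n by simp
  have ln: "Suc (length w) = n" using l n by simp
  have alt: "alternating_on n \<phi>" by (rule md_altv[OF f])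
  have z: "\<phi> (a # w[i := a]) = 0" if "i < length w" for a i
    using alt[unfolded alternating_on_def, rule_format, of "a # w[i := a]" 0 "Suc i"] that ln by simp
  have pm: "\<phi> (a # w[i := b]) = \<phi> (x # y # del_at i w)" if "i < length w" "{a, b} = {x, y}" for a b i
  proof -
    have "mset (a # w[i := b]) = mset (x # y # del_at i w)"
      using mset_upd_del[OF that(1), of b] that(2) by (auto simp: doubleton_eq_iff)
    then show ?thesis using symmD[OF md_symm[OF f], of "x # y # del_at i w" "a # w[i := b]"] that ln by simp
  qed
  let ?S1 = "\<Sum>i<length w. br y (w ! i) * \<phi> (x # y # del_at i w)"
  let ?S2 = "\<Sum>i<length w. br x (w ! i) * \<phi> (x # y # del_at i w)"
  have c4: "Lo br (x * y) (ct y \<phi>) w = x * Lo br y (ct y \<phi>) w + y * Lo br x (ct y \<phi>) w + ?S1"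
  proof -
    have "(\<Sum>i<length w. br y (w ! i) * ct y \<phi> (w[i := x]) + br x (w ! i) * ct y \<phi> (w[i := y])) = ?S1"
      by (intro sum.cong refl) (simp add: z pm[where a=y and b=x] pm[where a=x and b=y] insert_commute)
    then show ?thesis using L_mult_arg[OF fy l, of x y] by simp
  qed
  have c5: "Lo br (x * y) (ct x \<phi>) w = x * Lo br y (ct x \<phi>) w + y * Lo br x (ct x \<phi>) w + ?S2"
  proof -
    have "(\<Sum>i<length w. br y (w ! i) * ct x \<phi> (w[i := x]) + br x (w ! i) * ct x \<phi> (w[i := y])) = ?S2"
      by (intro sum.cong refl) (simp add: z pm[where a=y and b=x] pm[where a=x and b=y] insert_commute)
    then show ?thesis using L_mult_arg[OF fx l, of x y] by simp
  qed
  have "Lo br (x * y) (ct (x * y) \<phi>) w = Lo br (x * y) (\<lambda>v. x * ct y \<phi> v + y * ct x \<phi> v) w"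
    by (rule L_cong) (use md_der0[OF f] l n in simp)
  also have "\<dots> = Lo br (x * y) (\<lambda>v. x * ct y \<phi> v) w + Lo br (x * y) (\<lambda>v. y * ct x \<phi> v) w" by (rule L_add_fun)
  also have "\<dots> = x * Lo br (x * y) (ct y \<phi>) w + br (x * y) x * \<phi> (y # w)
      + (y * Lo br (x * y) (ct x \<phi>) w + br (x * y) y * \<phi> (x # w))"
    by (simp add: L_mult_fun ct_def)
  finally have 1: "Lo br (x * y) (ct (x * y) \<phi>) w = x * Lo br (x * y) (ct y \<phi>) w + br (x * y) x * \<phi> (y # w)
      + (y * Lo br (x * y) (ct x \<phi>) w + br (x * y) y * \<phi> (x # w))" .
  have xx: "\<phi> ((x * x) # w) = 0" using md_der0[OF f ln, of x x] by simp
  have yy: "\<phi> ((y * y) # w) = 0" using md_der0[OF f ln, of y y] by simp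
  have 2: "\<phi> (sq (x * y) # w) = x * x * \<phi> (sq y # w) + y * y * \<phi> (sq x # w) + x * y * \<phi> (br x y # w)
      + br x y * (x * \<phi> (y # w) + y * \<phi> (x # w))"
    by (simp add: sq_mult md_add0[OF f ln] md_der0[OF f ln] xx yy algebra_simps)
  have 3: "(\<Sum>i<length w. br (w ! i) (x * y) * \<phi> (x # y # del_at i w)) = x * ?S1 + y * ?S2"
    by (simp add: br_leib_right br_sym[of "w ! _"] sum.distrib sum_distrib_left algebra_simps)
  have bx: "br (x * y) x = x * br y x" by (simp add: br_leibniz br_alt)
  have by': "br (x * y) y = y * br x y" by (simp add: br_leibniz br_alt)
  show ?thesis unfolding 1 2 3 c4 c5 D2'[OF f n l] bx by'
    by (simp add: algebra_simps br_sym[of y x])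
qed

lemma DO_scale:
  assumes "\<And>z. length z = m \<longrightarrow> \<omega> (scale c x) z = scale (c ^ 2) (\<omega> x z)" and "length w = Suc m"
  shows "dCE br (\<omega> (scale c x)) w = scale (c ^ 2) (dCE br (\<omega> x) w)"
proof -
  have "dCE br (\<omega> (scale c x)) w = dCE br (\<lambda>z. scale (c ^ 2) (\<omega> x z)) w"
    by (rule D_cong2) (use assms in simp)
  then show ?thesis by (simp add: D_scale_fun)
qed

lemma DO_add:
  assumes "\<And>z. length z = m \<longrightarrow> \<omega> (x + y) z = \<omega> x z + \<omega> y z + \<phi> (x # y # z)" and "length w = Suc m"
  shows "dCE br (\<omega> (x + y)) w = dCE br (\<omega> x) w + dCE br (\<omega> y) w + dCE br (ct y (ct x \<phi>)) w"
proof -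
  have "dCE br (\<omega> (x + y)) w = dCE br (\<lambda>z. (\<omega> x z + \<omega> y z) + ct y (ct x \<phi>) z) w"
    by (rule D_cong2) (use assms in simp)
  then show ?thesis by (simp add: ct_def D_add_fun)
qed

lemma DO_mult:
  assumes "\<And>z. length z = m \<longrightarrow> \<omega> (x * y) z = x * x * \<omega> y z + y * y * \<omega> x z + x * y * \<phi> (x # y # z)" and "length w = Suc m"
  shows "dCE br (\<omega> (x * y)) w = x * x * dCE br (\<omega> y) w + y * y * dCE br (\<omega> x) w + x * y * dCE br (ct y (ct x \<phi>)) w
     + (\<Sum>i<length w. br (w ! i) (x * y) * \<phi> (x # y # del_at i w))"
proof -
  have "dCE br (\<omega> (x * y)) w = dCE br (\<lambda>z. (x * x * \<omega> y z + y * y * \<omega> x z) + x * y * ct y (ct x \<phi>) z) w"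
    by (rule D_cong2) (use assms in simp)
  also have "\<dots> = x * x * dCE br (\<omega> y) w + y * y * dCE br (\<omega> x) w + x * y * dCE br (ct y (ct x \<phi>)) w
     + (\<Sum>i<length w. br (w ! i) (x * x) * \<omega> y (del_at i w)) + (\<Sum>i<length w. br (w ! i) (y * y) * \<omega> x (del_at i w))
     + (\<Sum>i<length w. br (w ! i) (x * y) * ct y (ct x \<phi>) (del_at i w))"
    by (simp only: D_add_fun D_mult_fun) (simp add: add_ac ct_def)
  also have "\<dots> = x * x * dCE br (\<omega> y) w + y * y * dCE br (\<omega> x) w + x * y * dCE br (ct y (ct x \<phi>)) w
     + (\<Sum>i<length w. br (w ! i) (x * y) * \<phi> (x # y # del_at i w))"
    by (simp add: br_leib_right ct_def)
  finally show ?thesis .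
qed

end

context restricted_poisson_algebra begin

lemma D_two: "dCE br f [a, b] = f [br a b] + br a (f [b]) + br b (f [a])"
proof -
  have s: "symm (length [b]) f" by (simp add: symm_le1)
  show ?thesis unfolding D_Cons[OF s] by (simp add: Lo_def Eo_def D_single add_ac)
qed

lemma delta1_eq: "delta1 br sq \<psi> x z = Lo br x (ct x \<psi>) [] + \<psi> (sq x # [])"
  by (simp add: delta1_def Lo_def add.commute)

lemma md_d0: "md scale 1 (d0 br a)"
proof (rule mdI)
  show "symm 1 (d0 br a)" by (simp add: symm_le1)
qed (simp_all add: d0_def br_add_left br_scale_left br_leibniz)

lemma cochain_unfold:
  "PA_cochain scale n (\<phi>, \<omega>) \<longleftrightarrow> multiderivation scale n \<phi> \<and>
     (\<forall>x. multilinear_on scale (n - 2) (\<omega> x) \<and> alternating_on (n - 2) (\<omega> x) \<and> derivation_slots (n - 2) (\<omega> x)) \<and>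
     (\<forall>c x z. length z = n - 2 \<longrightarrow> \<omega> (scale c x) z = scale (c ^ 2) (\<omega> x z)) \<and>
     (\<forall>x y z. length z = n - 2 \<longrightarrow> \<omega> (x + y) z = \<omega> x z + \<omega> y z + \<phi> (x # y # z)) \<and>
     (\<forall>x y z. length z = n - 2 \<longrightarrow> \<omega> (x * y) z = (x * x) * \<omega> y z + (y * y) * \<omega> x z + x * y * \<phi> (x # y # z))"
  by (simp add: PA_cochain_def)

lemma part2:
  assumes "multiderivation scale 1 \<psi>"
  shows "PA_cochain scale 2 (d1 br sq \<psi>)"
proof -
  have f: "md scale 1 \<psi>" by (rule multider_md[OF assms])
  have n: "(1::nat) \<le> 1" by simp
  have l: "length ([]::'a list) = 1 - 1" by simp
  show ?thesis unfolding d1_def cochain_unfold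
  proof (intro conjI allI impI)
    show "multiderivation scale 2 (dCE br \<psi>)" using md_multider[OF md_D[OF f]] by (simp add: numeral_2_eq_2)
  next
    fix x
    show "multilinear_on scale (2 - 2) (delta1 br sq \<psi> x)" by (simp add: multilinear_on_def)
    show "alternating_on (2 - 2) (delta1 br sq \<psi> x)" by (simp add: alternating_on_def)
    show "derivation_slots (2 - 2) (delta1 br sq \<psi> x)" by (simp add: derivation_slots_def)
  next
    fix c x and z :: "'a list" assume "length z = 2 - 2"
    show "delta1 br sq \<psi> (scale c x) z = scale (c ^ 2) (delta1 br sq \<psi> x z)"
      unfolding delta1_eq by (rule V_scale[OF f n l])
  next
    fix x y and z :: "'a list" assume z: "length z = 2 - 2"
    then have z0: "z = []" by simp
    show "delta1 br sq \<psi> (x + y) z = delta1 br sq \<psi> x z + delta1 br sq \<psi> y z + dCE br \<psi> (x # y # z)"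
      unfolding delta1_eq V_add[OF f n l] z0 by simp
  next
    fix x y and z :: "'a list" assume z: "length z = 2 - 2"
    then have z0: "z = []" by simp
    show "delta1 br sq \<psi> (x * y) z = x * x * delta1 br sq \<psi> y z + y * y * delta1 br sq \<psi> x z + x * y * dCE br \<psi> (x # y # z)"
      unfolding delta1_eq V_mult[OF f n l] z0 by simp
  qed
qed

lemma part3:
  assumes n: "2 \<le> n" and c: "PA_cochain scale n c"
  shows "PA_cochain scale (Suc n) (dPA br sq c)"
proof -
  obtain \<phi> \<omega> where c': "c = (\<phi>, \<omega>)" by (cases c)
  have C: "multiderivation scale n \<phi> \<and>
     (\<forall>x. multilinear_on scale (n - 2) (\<omega> x) \<and> alternating_on (n - 2) (\<omega> x) \<and> derivation_slots (n - 2) (\<omega> x)) \<and>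
     (\<forall>c x z. length z = n - 2 \<longrightarrow> \<omega> (scale c x) z = scale (c ^ 2) (\<omega> x z)) \<and>
     (\<forall>x y z. length z = n - 2 \<longrightarrow> \<omega> (x + y) z = \<omega> x z + \<omega> y z + \<phi> (x # y # z)) \<and>
     (\<forall>x y z. length z = n - 2 \<longrightarrow> \<omega> (x * y) z = (x * x) * \<omega> y z + (y * y) * \<omega> x z + x * y * \<phi> (x # y # z))"
    using c unfolding c' cochain_unfold .
  have f: "md scale n \<phi>" using C multider_md by blast
  have fo: "md scale (n - 2) (\<omega> x)" for x
    using C multider_md unfolding multiderivation_def by blast
  have n1: "1 \<le> n" using n by simp
  have eq: "deltaN br sq \<phi> \<omega> x w = (Lo br x (ct x \<phi>) w + \<phi> (sq x # w)) + dCE br (\<omega> x) w"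
    if "length w = n - 1" for x w
  proof -
    have "symm (Suc (length w)) \<phi>" using md_symm[OF f] that n by simp
    then show ?thesis by (simp add: deltaN_eq)
  qed
  have lw: "length w = Suc (n - 2)" if "length w = Suc n - 2" for w :: "'a list" using that n by simp
  have lw1: "length w = n - 1" if "length w = Suc n - 2" for w :: "'a list" using that n by simp
  show ?thesis unfolding c' dPA_def cochain_unfold prod.case
  proof (intro conjI allI impI)
    show "multiderivation scale (Suc n) (dCE br \<phi>)" by (rule md_multider[OF md_D[OF f]])
  next
    fix x
    have fc: "md scale (n - 1) (ct x \<phi>)" using md_ct[of "n - 1" \<phi> x] f n by simp
    have m: "md scale (n - 1) (\<lambda>w. (Lo br x (ct x \<phi>) w + \<phi> (sq x # w)) + dCE br (\<omega> x) w)"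
    proof (rule md_add[OF md_add])
      show "md scale (n - 1) (Lo br x (ct x \<phi>))" by (rule md_L[OF fc])
      show "md scale (n - 1) (\<lambda>w. \<phi> (sq x # w))" using md_ct[of "n - 1" \<phi> "sq x"] f n by (simp add: ct_def)
      show "md scale (n - 1) (dCE br (\<omega> x))" using md_D[OF fo[of x]] n by (simp add: Suc_diff_Suc numeral_2_eq_2)
    qed
    have "md scale (n - 1) (deltaN br sq \<phi> \<omega> x)" by (rule md_cong[OF m]) (simp add: eq)
    then have "multiderivation scale (Suc n - 2) (deltaN br sq \<phi> \<omega> x)" using md_multider n by simp
    then show "multilinear_on scale (Suc n - 2) (deltaN br sq \<phi> \<omega> x)"
      and "alternating_on (Suc n - 2) (deltaN br sq \<phi> \<omega> x)"
      and "derivation_slots (Suc n - 2) (deltaN br sq \<phi> \<omega> x)" unfolding multiderivation_def by auto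
  next
    fix c x and z :: "'a list" assume z: "length z = Suc n - 2"
    have os: "\<And>z. length z = n - 2 \<longrightarrow> \<omega> (scale c x) z = scale (c ^ 2) (\<omega> x z)" using C by blast
    show "deltaN br sq \<phi> \<omega> (scale c x) z = scale (c ^ 2) (deltaN br sq \<phi> \<omega> x z)"
      unfolding eq[OF lw1[OF z]] V_scale[OF f n1 lw1[OF z]] DO_scale[OF os lw[OF z]]
      by (simp add: scale_right_distrib)
  next
    fix x y and z :: "'a list" assume z: "length z = Suc n - 2"
    have oa: "\<And>z. length z = n - 2 \<longrightarrow> \<omega> (x + y) z = \<omega> x z + \<omega> y z + \<phi> (x # y # z)" using C by blast
    show "deltaN br sq \<phi> \<omega> (x + y) z = deltaN br sq \<phi> \<omega> x z + deltaN br sq \<phi> \<omega> y z + dCE br \<phi> (x # y # z)"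
      unfolding eq[OF lw1[OF z]] V_add[OF f n1 lw1[OF z]] DO_add[OF oa lw[OF z]]
      by (simp add: C2)
  next
    fix x y and z :: "'a list" assume z: "length z = Suc n - 2"
    have om: "\<And>z. length z = n - 2 \<longrightarrow> \<omega> (x * y) z = x * x * \<omega> y z + y * y * \<omega> x z + x * y * \<phi> (x # y # z)" using C by blast
    show "deltaN br sq \<phi> \<omega> (x * y) z = x * x * deltaN br sq \<phi> \<omega> y z + y * y * deltaN br sq \<phi> \<omega> x z + x * y * dCE br \<phi> (x # y # z)"
      unfolding eq[OF lw1[OF z]] V_mult[OF f n1 lw1[OF z]] DO_mult[OF om lw[OF z]]
      by (simp add: distrib_left C2)
  qed
qed

lemma part4: "PA_is_zero 2 (d1 br sq (d0 br a))"
  unfolding PA_is_zero_def d1_def prod.case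
proof (intro conjI allI impI)
  fix xs :: "'a list" assume "length xs = 2"
  then obtain p q where xs: "xs = [p, q]" by (metis (no_types, lifting) One_nat_def Suc_1 length_0_conv length_Suc_conv)
  show "dCE br (d0 br a) xs = 0" unfolding xs D_two by (simp add: d0_def jac[of p q a, symmetric] C2)
next
  fix x and zs :: "'a list"
  show "delta1 br sq (d0 br a) x zs = 0" by (simp add: delta1_def d0_def sq_ad)
qed

lemma part5:
  assumes "multiderivation scale 1 \<psi>"
  shows "PA_is_zero 3 (dPA br sq (d1 br sq \<psi>))"
proof -
  have f: "md scale 1 \<psi>" by (rule multider_md[OF assms])
  show ?thesis unfolding PA_is_zero_def d1_def dPA_def prod.case
  proof (intro conjI allI impI)
    fix xs :: "'a list" assume "length xs = 3"
    then show "dCE br (dCE br \<psi>) xs = 0" using DD[OF f] by (simp add: numeral_3_eq_3)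
  next
    fix x and zs :: "'a list" assume l: "length zs = 3 - 2"
    show "deltaN br sq (dCE br \<psi>) (delta1 br sq \<psi>) x zs = 0"
    proof (rule dd_delta[OF f _ _ _ D_zero_fun])
      show "(1::nat) \<le> 1" by simp
      show "length zs = 1" using l by simp
      fix w :: "'a list" assume "length w = 1 - 1"
      then show "delta1 br sq \<psi> x w = Lo br x (ct x \<psi>) w + \<psi> (sq x # w) + 0"
        by (simp add: delta1_eq)
    qed
  qed
qed

lemma part6:
  assumes n: "2 \<le> n" and c: "PA_cochain scale n c"
  shows "PA_is_zero (Suc (Suc n)) (dPA br sq (dPA br sq c))"
proof -
  obtain \<phi> \<omega> where c': "c = (\<phi>, \<omega>)" by (cases c)
  have C: "multiderivation scale n \<phi> \<and>
     (\<forall>x. multilinear_on scale (n - 2) (\<omega> x) \<and> alternating_on (n - 2) (\<omega> x) \<and> derivation_slots (n - 2) (\<omega> x))"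
    using c unfolding c' cochain_unfold by blast
  have f: "md scale n \<phi>" using C multider_md by blast
  have fo: "md scale (n - 2) (\<omega> x)" for x
    using C multider_md unfolding multiderivation_def by blast
  have n1: "1 \<le> n" using n by simp
  show ?thesis unfolding c' dPA_def PA_is_zero_def prod.case
  proof (intro conjI allI impI)
    fix xs :: "'a list" assume "length xs = Suc (Suc n)"
    then show "dCE br (dCE br \<phi>) xs = 0" using DD[OF f] by simp
  next
    fix x and zs :: "'a list" assume l: "length zs = Suc (Suc n) - 2"
    show "deltaN br sq (dCE br \<phi>) (deltaN br sq \<phi> \<omega>) x zs = 0"
    proof (rule dd_delta[OF f n1])
      show lz: "length zs = n" using l by simp
      fix w :: "'a list" assume lw: "length w = n - 1"
      have "symm (Suc (length w)) \<phi>" using md_symm[OF f] lw n by simp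
      then show "deltaN br sq \<phi> \<omega> x w = Lo br x (ct x \<phi>) w + \<phi> (sq x # w) + dCE br (\<omega> x) w"
        by (simp add: deltaN_eq)
    next
      show "dCE br (dCE br (\<omega> x)) zs = 0" using DD[OF fo[of x]] l n by simp
    qed
  qed
qed

end

theorem mainTheorem4:
  fixes scale :: "'k::field \<Rightarrow> 'a::comm_ring \<Rightarrow> 'a"
    and br :: "'a \<Rightarrow> 'a \<Rightarrow> 'a"
    and sq :: "'a \<Rightarrow> 'a"
  assumes "restricted_poisson_algebra scale br sq"
  shows "(\<forall>a. multiderivation scale 1 (d0 br a))
    \<and> (\<forall>\<psi>. multiderivation scale 1 \<psi> \<longrightarrow> PA_cochain scale 2 (d1 br sq \<psi>))
    \<and> (\<forall>n c. 2 \<le> n \<longrightarrow> PA_cochain scale n c \<longrightarrow> PA_cochain scale (Suc n) (dPA br sq c))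
    \<and> (\<forall>a. PA_is_zero 2 (d1 br sq (d0 br a)))
    \<and> (\<forall>\<psi>. multiderivation scale 1 \<psi> \<longrightarrow> PA_is_zero 3 (dPA br sq (d1 br sq \<psi>)))
    \<and> (\<forall>n c. 2 \<le> n \<longrightarrow> PA_cochain scale n c \<longrightarrow> PA_is_zero (Suc (Suc n)) (dPA br sq (dPA br sq c)))"
proof -
  interpret R: restricted_poisson_algebra scale br sq by (rule assms)
  show ?thesis
    using md_multider[OF R.md_d0] R.part2 R.part3 R.part4 R.part5 R.part6 by blast
qed


end
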